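(* There is an absolute constant $c>0$ such that the following holds. Let $\epsilon>0$, $\delta\in(0,1)$, assume $C_2<\infty$, $\epsilon_{\mathcal G,\mathcal V,\mathcal P}=\epsilon_{\mathcal V,\mathcal P}=0$, and $0<\lambda\le\frac{(1-\gamma)\epsilon}{2\ln|\mathcal A|}$. If $$n\ge c\,\frac{C_2\,V_{\lambda,\max}^2\ln\frac{|\mathcal V||\mathcal P||\mathcal G|}{\delta}}{\epsilon^2(1-\gamma)^2},$$ then with probability at least $1-\delta$ over the draw of $\mathcal D$, any SBEED output $(\hat V,\hat\pi)$ satisfies $J(\pi^\star)-J(\hat\pi)\le\epsilon$.
   Context: A finite MDP $(\mathcal S,\mathcal A,\gamma,P,R,d_0)$ with $\gamma\in[0,1)$, $P(\cdot\mid s,a)\in\Delta(\mathcal S)$, $R:\mathcal S\times\mathcal A\to[0,R_{\max}]$, $d_0\in\Delta(\mathcal S)$. For a policy $\pi$ and $\lambda\ge0$, $J_\lambda(\pi)=\mathbb E\big[\sum_{t\ge0}\gamma^t(R(s_t,a_t)-\lambda\ln\pi(a_t\mid s_t))\big]$ with $s_0\sim d_0$, $a_t\sim\pi(\cdot\mid s_t)$, $s_{t+1}\sim P(\cdot\mid s_t,a_t)$; $J=J_0$. $\pi^\star$ is a deterministic maximizer of $J$, $\pi^\star_\lambda$ the maximizer of $J_\lambda$. Occupancy $d^\pi(s)=(1-\gamma)\sum_t\gamma^t\Pr(s_t=s)$, $d^\pi(s,a)=d^\pi(s)\pi(a\mid s)$. $(\mathbb PV)(s,a)=\sum_{s'}P(s'\mid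 s,a)V(s')$; consistency operator $(\mathcal C^\pi_\lambda V)(s,a)=R(s,a)+\gamma(\mathbb PV)(s,a)-\lambda\ln\pi(a\mid s)$. Data distribution $\mu\in\Delta(\mathcal S\times\mathcal A)$, $\|f\|^2_{2,\mu}=\mathbb E_{\mu}[f(s,a)^2]$ (for $V$ depending only on $s$, $V-\mathcal C^\pi_\lambda V$ is the function $(s,a)\mapsto V(s)-(\mathcal C^\pi_\lambda V)(s,a)$). $V_{\lambda,\max}=(R_{\max}+\lambda\ln|\mathcal A|)/(1-\gamma)$. Finite function classes: $\mathcal V\subset[0,V_{\lambda,\max}]^{\mathcal S}$, $\mathcal P\subset\{\pi:\|\ln\pi\|_\infty\le V_{\lambda,\max}/\lambda\}$, $\mathcal G\subset[0,2V_{\lambda,\max}]^{\mathcal S\times\mathcal A}$. Dataset $\mathcal D=\{(s_i,a_i,r_i,s_i')\}_{i=1}^n$ with $(s_i,a_i)$ i.i.d. from $\mu$, $r_i=R(s_i,a_i)$, $s_i'\sim P(\cdot\mid s_i,a_i)$ independently. Empirical losses: $\mathscr L_{\mathcal D}(V;V,\pi)=\frac1n\sum_i\big(V(s_i)-r_i-\gamma V(s_i')+\lambda\ln\pi(a_i\mid s_i)\big)^2$ and $\mathscr R_{\mathcal D}(g;V,\pi)=\frac1n\sum_i\big(g(s_i,a_i)-r_i-\gamma V(s_i')+\lambda\ln\pi(a_i\mid s_i)\big)^2$. The SBEED output is $(\hat V,\hat\pi)\in\arg\min_{V\in\mathcal V,\pi\in\mathcal P}\max_{g\in\mathcal G}\big[\mathscr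 L_{\mathcal D}(V;V,\pi)-\mathscr R_{\mathcal D}(g;V,\pi)\big]$. Concentrability: $C_2=\max_{\pi\in\mathcal P\cup\{\pi^\star_\lambda\}}\|d^\pi/\mu\|^2_{2,\mu}$. Approximation errors: $\epsilon_{\mathcal V,\mathcal P}=\min_{V\in\mathcal V,\pi\in\mathcal P}\|V-\mathcal C^\pi_\lambda V\|^2_{2,\mu}$ and $\epsilon_{\mathcal G,\mathcal V,\mathcal P}=\max_{V\in\mathcal V,\pi\in\mathcal P}\min_{g\in\mathcal G}\|g-\mathcal C^\pi_\lambda V\|^2_{2,\mu}$. *)

theory Defs
  imports "HOL-Probability.Probability"
begin

text \<open>Finite MDP carried on natural numbers: the state space is a finite set S of nats,
the action space a finite set A of nats (so that the absolute constant in the theorem does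
not depend on |S| or |A|). Transition kernel P s a :: nat pmf, initial distribution d0,
policies are maps nat => nat pmf (\<pi>(a|s) = pmf (\<pi> s) a).\<close>

definition policy :: "nat set \<Rightarrow> nat set \<Rightarrow> (nat \<Rightarrow> nat pmf) \<Rightarrow> bool" where
  "policy S A \<pi> \<longleftrightarrow> (\<forall>s\<in>S. set_pmf (\<pi> s) \<subseteq> A) \<and> (\<forall>s. s \<notin> S \<longrightarrow> \<pi> s = undefined)"

definition deterministic_policy :: "nat set \<Rightarrow> nat set \<Rightarrow> (nat \<Rightarrow> nat pmf) \<Rightarrow> bool" where
  "deterministic_policy S A \<pi> \<longleftrightarrow> policy S A \<pi> \<and> (\<forall>s\<in>S. \<exists>a. \<pi> s = return_pmf a)"

primrec state_pmf :: "(nat \<Rightarrow> nat \<Rightarrow> nat pmf) \<Rightarrow> nat pmf \<Rightarrow> (nat \<Rightarrow> nat pmf) \<Rightarrow> nat \<Rightarrow> nat pmf" where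
  "state_pmf P d0 \<pi> 0 = d0"
| "state_pmf P d0 \<pi> (Suc t) =
     bind_pmf (state_pmf P d0 \<pi> t) (\<lambda>s. bind_pmf (\<pi> s) (\<lambda>a. P s a))"

definition J_reg :: "real \<Rightarrow> (nat \<Rightarrow> nat \<Rightarrow> nat pmf) \<Rightarrow> (nat \<Rightarrow> nat \<Rightarrow> real) \<Rightarrow> nat pmf
      \<Rightarrow> real \<Rightarrow> (nat \<Rightarrow> nat pmf) \<Rightarrow> real" where
  "J_reg \<gamma> P R d0 lam \<pi> =
     (\<Sum>t. \<gamma> ^ t * measure_pmf.expectation (state_pmf P d0 \<pi> t)
        (\<lambda>s. measure_pmf.expectation (\<pi> s) (\<lambda>a. R s a - lam * ln (pmf (\<pi> s) a))))"

definition J_ret :: "real \<Rightarrow> (nat \<Rightarrow> nat \<Rightarrow> nat pmf) \<Rightarrow> (nat \<Rightarrow> nat \<Rightarrow> real) \<Rightarrow> nat pmf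
      \<Rightarrow> (nat \<Rightarrow> nat pmf) \<Rightarrow> real" where
  "J_ret \<gamma> P R d0 \<pi> = J_reg \<gamma> P R d0 0 \<pi>"

definition occupancy :: "real \<Rightarrow> (nat \<Rightarrow> nat \<Rightarrow> nat pmf) \<Rightarrow> nat pmf \<Rightarrow> (nat \<Rightarrow> nat pmf)
      \<Rightarrow> nat \<times> nat \<Rightarrow> real" where
  "occupancy \<gamma> P d0 \<pi> = (\<lambda>(s,a). (1 - \<gamma>) * (\<Sum>t. \<gamma> ^ t * pmf (state_pmf P d0 \<pi> t) s) * pmf (\<pi> s) a)"

definition norm2_mu :: "(nat \<times> nat) pmf \<Rightarrow> (nat \<times> nat \<Rightarrow> real) \<Rightarrow> real" where
  "norm2_mu \<mu> f = measure_pmf.expectation \<mu> (\<lambda>x. (f x)\<^sup>2)"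

definition consist :: "real \<Rightarrow> (nat \<Rightarrow> nat \<Rightarrow> nat pmf) \<Rightarrow> (nat \<Rightarrow> nat \<Rightarrow> real) \<Rightarrow> real
      \<Rightarrow> (nat \<Rightarrow> nat pmf) \<Rightarrow> (nat \<Rightarrow> real) \<Rightarrow> nat \<times> nat \<Rightarrow> real" where
  "consist \<gamma> P R lam \<pi> V = (\<lambda>(s,a). R s a + \<gamma> * measure_pmf.expectation (P s a) V - lam * ln (pmf (\<pi> s) a))"

definition Vmax :: "nat set \<Rightarrow> real \<Rightarrow> real \<Rightarrow> real \<Rightarrow> real" where
  "Vmax A \<gamma> Rmax lam = (Rmax + lam * ln (real (card A))) / (1 - \<gamma>)"

definition conc_C2 :: "real \<Rightarrow> (nat \<Rightarrow> nat \<Rightarrow> nat pmf) \<Rightarrow> nat pmf \<Rightarrow> (nat \<times> nat) pmf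
      \<Rightarrow> (nat \<Rightarrow> nat pmf) set \<Rightarrow> real" where
  "conc_C2 \<gamma> P d0 \<mu> Pis =
     Max ((\<lambda>\<pi>. norm2_mu \<mu> (\<lambda>x. occupancy \<gamma> P d0 \<pi> x / pmf \<mu> x)) ` Pis)"

text \<open>C_2 < infinity: every occupancy in the family is absolutely continuous w.r.t. mu.\<close>
definition C2_finite :: "nat set \<Rightarrow> nat set \<Rightarrow> real \<Rightarrow> (nat \<Rightarrow> nat \<Rightarrow> nat pmf) \<Rightarrow> nat pmf
      \<Rightarrow> (nat \<times> nat) pmf \<Rightarrow> (nat \<Rightarrow> nat pmf) set \<Rightarrow> bool" where
  "C2_finite S A \<gamma> P d0 \<mu> Pis \<longleftrightarrow>
     (\<forall>\<pi>\<in>Pis. \<forall>x\<in>S \<times> A. pmf \<mu> x = 0 \<longrightarrow> occupancy \<gamma> P d0 \<pi> x = 0)"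

definition eps_VP :: "real \<Rightarrow> (nat \<Rightarrow> nat \<Rightarrow> nat pmf) \<Rightarrow> (nat \<Rightarrow> nat \<Rightarrow> real) \<Rightarrow> real
      \<Rightarrow> (nat \<times> nat) pmf \<Rightarrow> (nat \<Rightarrow> real) set \<Rightarrow> (nat \<Rightarrow> nat pmf) set \<Rightarrow> real" where
  "eps_VP \<gamma> P R lam \<mu> Vc Pc =
     Min ((\<lambda>(V, \<pi>). norm2_mu \<mu> (\<lambda>(s,a). V s - consist \<gamma> P R lam \<pi> V (s,a))) ` (Vc \<times> Pc))"

definition eps_GVP :: "real \<Rightarrow> (nat \<Rightarrow> nat \<Rightarrow> nat pmf) \<Rightarrow> (nat \<Rightarrow> nat \<Rightarrow> real) \<Rightarrow> real
      \<Rightarrow> (nat \<times> nat) pmf \<Rightarrow> (nat \<times> nat \<Rightarrow> real) set \<Rightarrow> (nat \<Rightarrow> real) set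
      \<Rightarrow> (nat \<Rightarrow> nat pmf) set \<Rightarrow> real" where
  "eps_GVP \<gamma> P R lam \<mu> Gc Vc Pc =
     Max ((\<lambda>(V, \<pi>). Min ((\<lambda>g. norm2_mu \<mu> (\<lambda>x. g x - consist \<gamma> P R lam \<pi> V x)) ` Gc)) ` (Vc \<times> Pc))"

text \<open>One sample (s,a,s'): (s,a) ~ mu, s' ~ P(.|s,a); the reward r = R(s,a) is computed from (s,a).
 A dataset of size n is n independent samples.\<close>
definition sample_pmf :: "(nat \<times> nat) pmf \<Rightarrow> (nat \<Rightarrow> nat \<Rightarrow> nat pmf) \<Rightarrow> (nat \<times> nat \<times> nat) pmf" where
  "sample_pmf \<mu> P = bind_pmf \<mu> (\<lambda>(s,a). map_pmf (\<lambda>s'. (s, a, s')) (P s a))"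

primrec dataset_pmf :: "(nat \<times> nat) pmf \<Rightarrow> (nat \<Rightarrow> nat \<Rightarrow> nat pmf) \<Rightarrow> nat \<Rightarrow> (nat \<times> nat \<times> nat) list pmf" where
  "dataset_pmf \<mu> P 0 = return_pmf []"
| "dataset_pmf \<mu> P (Suc n) =
     bind_pmf (sample_pmf \<mu> P) (\<lambda>x. map_pmf (\<lambda>xs. x # xs) (dataset_pmf \<mu> P n))"

definition loss_L :: "real \<Rightarrow> (nat \<Rightarrow> nat \<Rightarrow> real) \<Rightarrow> real \<Rightarrow> (nat \<times> nat \<times> nat) list
      \<Rightarrow> (nat \<Rightarrow> real) \<Rightarrow> (nat \<Rightarrow> nat pmf) \<Rightarrow> real" where
  "loss_L \<gamma> R lam D V \<pi> =
     (\<Sum>(s, a, s')\<leftarrow>D. (V s - R s a - \<gamma> * V s' + lam * ln (pmf (\<pi> s) a))\<^sup>2) / real (length D)"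

definition loss_R :: "real \<Rightarrow> (nat \<Rightarrow> nat \<Rightarrow> real) \<Rightarrow> real \<Rightarrow> (nat \<times> nat \<times> nat) list
      \<Rightarrow> (nat \<times> nat \<Rightarrow> real) \<Rightarrow> (nat \<Rightarrow> real) \<Rightarrow> (nat \<Rightarrow> nat pmf) \<Rightarrow> real" where
  "loss_R \<gamma> R lam D g V \<pi> =
     (\<Sum>(s, a, s')\<leftarrow>D. (g (s, a) - R s a - \<gamma> * V s' + lam * ln (pmf (\<pi> s) a))\<^sup>2) / real (length D)"

definition sbeed_obj :: "real \<Rightarrow> (nat \<Rightarrow> nat \<Rightarrow> real) \<Rightarrow> real \<Rightarrow> (nat \<times> nat \<Rightarrow> real) set
      \<Rightarrow> (nat \<times> nat \<times> nat) list \<Rightarrow> (nat \<Rightarrow> real) \<Rightarrow> (nat \<Rightarrow> nat pmf) \<Rightarrow> real" where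
  "sbeed_obj \<gamma> R lam Gc D V \<pi> =
     Max ((\<lambda>g. loss_L \<gamma> R lam D V \<pi> - loss_R \<gamma> R lam D g V \<pi>) ` Gc)"

definition sbeed_output :: "real \<Rightarrow> (nat \<Rightarrow> nat \<Rightarrow> real) \<Rightarrow> real \<Rightarrow> (nat \<Rightarrow> real) set
      \<Rightarrow> (nat \<Rightarrow> nat pmf) set \<Rightarrow> (nat \<times> nat \<Rightarrow> real) set
      \<Rightarrow> (nat \<times> nat \<times> nat) list \<Rightarrow> (nat \<Rightarrow> real) \<Rightarrow> (nat \<Rightarrow> nat pmf) \<Rightarrow> bool" where
  "sbeed_output \<gamma> R lam Vc Pc Gc D V \<pi> \<longleftrightarrow>
     V \<in> Vc \<and> \<pi> \<in> Pc \<and>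
     (\<forall>V'\<in>Vc. \<forall>\<pi>'\<in>Pc. sbeed_obj \<gamma> R lam Gc D V \<pi> \<le> sbeed_obj \<gamma> R lam Gc D V' \<pi>')"

definition finite_mdp :: "nat set \<Rightarrow> nat set \<Rightarrow> real \<Rightarrow> (nat \<Rightarrow> nat \<Rightarrow> nat pmf)
      \<Rightarrow> (nat \<Rightarrow> nat \<Rightarrow> real) \<Rightarrow> real \<Rightarrow> nat pmf \<Rightarrow> bool" where
  "finite_mdp S A \<gamma> P R Rmax d0 \<longleftrightarrow>
     finite S \<and> S \<noteq> {} \<and> finite A \<and> A \<noteq> {} \<and> 0 \<le> \<gamma> \<and> \<gamma> < 1 \<and>
     (\<forall>s\<in>S. \<forall>a\<in>A. set_pmf (P s a) \<subseteq> S \<and> 0 \<le> R s a \<and> R s a \<le> Rmax) \<and>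
     set_pmf d0 \<subseteq> S"

definition function_classes :: "nat set \<Rightarrow> nat set \<Rightarrow> real \<Rightarrow> real
      \<Rightarrow> (nat \<Rightarrow> real) set \<Rightarrow> (nat \<Rightarrow> nat pmf) set \<Rightarrow> (nat \<times> nat \<Rightarrow> real) set \<Rightarrow> bool" where
  "function_classes S A vmax lam Vc Pc Gc \<longleftrightarrow>
     finite Vc \<and> Vc \<noteq> {} \<and> finite Pc \<and> Pc \<noteq> {} \<and> finite Gc \<and> Gc \<noteq> {} \<and>
     (\<forall>V\<in>Vc. (\<forall>s\<in>S. 0 \<le> V s \<and> V s \<le> vmax) \<and> (\<forall>s. s \<notin> S \<longrightarrow> V s = 0)) \<and>
     (\<forall>\<pi>\<in>Pc. policy S A \<pi> \<and>
        (\<forall>s\<in>S. \<forall>a\<in>A. \<bar>ln (pmf (\<pi> s) a)\<bar> \<le> vmax / lam \<and> 0 < pmf (\<pi> s) a)) \<and>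
     (\<forall>g\<in>Gc. (\<forall>x\<in>S \<times> A. 0 \<le> g x \<and> g x \<le> 2 * vmax) \<and> (\<forall>x. x \<notin> S \<times> A \<longrightarrow> g x = 0))"

end

theory Submission
  imports Defs
begin


lemma exp_sum:
  assumes "finite X" "set_pmf p \<subseteq> X"
  shows "measure_pmf.expectation p f = (\<Sum>x\<in>X. pmf p x * f x)"
  by (subst integral_measure_pmf_real[of X]) (use assms in \<open>auto simp: mult.commute\<close>)

context
  fixes S A \<gamma> P R Rmax d0
  assumes mdp: "finite_mdp S A \<gamma> P R Rmax d0"
begin

lemma fS: "finite S" and fA: "finite A" and g0: "0 \<le> \<gamma>" and g1: "\<gamma> < 1"
  and PS: "\<And>s a. s \<in> S \<Longrightarrow> a \<in> A \<Longrightarrow> set_pmf (P s a) \<subseteq> S"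
  and d0S: "set_pmf d0 \<subseteq> S"
  and SNE: "S \<noteq> {}" and ANE: "A \<noteq> {}"
  using mdp by (auto simp: finite_mdp_def)

lemma state_supp:
  assumes "policy S A \<pi>"
  shows "set_pmf (state_pmf P d0 \<pi> t) \<subseteq> S"
proof (induction t)
  case 0 then show ?case using d0S by simp
next
  case (Suc t)
  show ?case
  proof
    fix x assume "x \<in> set_pmf (state_pmf P d0 \<pi> (Suc t))"
    then obtain s a where s: "s \<in> set_pmf (state_pmf P d0 \<pi> t)" and a: "a \<in> set_pmf (\<pi> s)"
       and x: "x \<in> set_pmf (P s a)" by auto
    have "s \<in> S" using s Suc by auto
    moreover have "a \<in> A" using a assms \<open>s \<in> S\<close> by (auto simp: policy_def)
    ultimately show "x \<in> S" using PS x by auto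
  qed
qed

lemma pol_supp: "policy S A \<pi> \<Longrightarrow> s \<in> S \<Longrightarrow> set_pmf (\<pi> s) \<subseteq> A"
  by (auto simp: policy_def)

lemma state_sum1: "policy S A \<pi> \<Longrightarrow> (\<Sum>s\<in>S. pmf (state_pmf P d0 \<pi> t) s) = 1"
  using sum_pmf_eq_1[OF fS state_supp] by blast

lemma pol_sum1: "policy S A \<pi> \<Longrightarrow> s \<in> S \<Longrightarrow> (\<Sum>a\<in>A. pmf (\<pi> s) a) = 1"
  using sum_pmf_eq_1[OF fA pol_supp] by blast

lemma state_pmf_Suc:
  assumes "policy S A \<pi>"
  shows "pmf (state_pmf P d0 \<pi> (Suc t)) s' =
     (\<Sum>s\<in>S. pmf (state_pmf P d0 \<pi> t) s * (\<Sum>a\<in>A. pmf (\<pi> s) a * pmf (P s a) s'))"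
proof -
  have "pmf (state_pmf P d0 \<pi> (Suc t)) s' =
     measure_pmf.expectation (state_pmf P d0 \<pi> t) (\<lambda>s. measure_pmf.expectation (\<pi> s) (\<lambda>a. pmf (P s a) s'))"
    by (simp add: pmf_bind)
  also have "\<dots> = (\<Sum>s\<in>S. pmf (state_pmf P d0 \<pi> t) s * measure_pmf.expectation (\<pi> s) (\<lambda>a. pmf (P s a) s'))"
    by (rule exp_sum[OF fS state_supp[OF assms]])
  also have "\<dots> = (\<Sum>s\<in>S. pmf (state_pmf P d0 \<pi> t) s * (\<Sum>a\<in>A. pmf (\<pi> s) a * pmf (P s a) s'))"
    by (intro sum.cong refl arg_cong2[where f="(*)"] exp_sum[OF fA pol_supp[OF assms]])
  finally show ?thesis .
qed

lemma state_step:
  assumes "policy S A \<pi>"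
  shows "(\<Sum>s'\<in>S. pmf (state_pmf P d0 \<pi> (Suc t)) s' * V s') =
     (\<Sum>s\<in>S. pmf (state_pmf P d0 \<pi> t) s * (\<Sum>a\<in>A. pmf (\<pi> s) a * (\<Sum>s'\<in>S. pmf (P s a) s' * V s')))"
proof -
  have "(\<Sum>s'\<in>S. pmf (state_pmf P d0 \<pi> (Suc t)) s' * V s') =
     (\<Sum>s'\<in>S. \<Sum>s\<in>S. \<Sum>a\<in>A. pmf (state_pmf P d0 \<pi> t) s * pmf (\<pi> s) a * pmf (P s a) s' * V s')"
    unfolding state_pmf_Suc[OF assms] by (simp add: sum_distrib_left sum_distrib_right mult.assoc)
  also have "\<dots> = (\<Sum>s\<in>S. \<Sum>s'\<in>S. \<Sum>a\<in>A. pmf (state_pmf P d0 \<pi> t) s * pmf (\<pi> s) a * pmf (P s a) s' * V s')"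
    by (rule sum.swap)
  also have "\<dots> = (\<Sum>s\<in>S. \<Sum>a\<in>A. \<Sum>s'\<in>S. pmf (state_pmf P d0 \<pi> t) s * pmf (\<pi> s) a * pmf (P s a) s' * V s')"
    by (rule sum.cong[OF refl], rule sum.swap)
  also have "\<dots> = (\<Sum>s\<in>S. pmf (state_pmf P d0 \<pi> t) s * (\<Sum>a\<in>A. pmf (\<pi> s) a * (\<Sum>s'\<in>S. pmf (P s a) s' * V s')))"
    by (simp add: sum_distrib_left mult.assoc)
  finally show ?thesis .
qed

end


lemma abs_pmf_sum_le: "finite X \<Longrightarrow> \<bar>\<Sum>x\<in>X. pmf p x * f x\<bar> \<le> (\<Sum>x\<in>X. \<bar>f x\<bar>)"
proof -
  assume "finite X"
  have "\<bar>\<Sum>x\<in>X. pmf p x * f x\<bar> \<le> (\<Sum>x\<in>X. \<bar>pmf p x * f x\<bar>)" by (rule sum_abs)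
  also have "\<dots> \<le> (\<Sum>x\<in>X. \<bar>f x\<bar>)"
  proof (rule sum_mono)
    fix x show "\<bar>pmf p x * f x\<bar> \<le> \<bar>f x\<bar>"
      using pmf_le_1[of p x] pmf_nonneg[of p x]
      by (simp add: abs_mult mult_left_le_one_le)
  qed
  finally show ?thesis .
qed

lemma gibbs:
  fixes p q :: "'a \<Rightarrow> real"
  assumes "finite A" "\<And>a. a \<in> A \<Longrightarrow> 0 \<le> p a" "sum p A = 1" "\<And>a. a \<in> A \<Longrightarrow> 0 < q a" "sum q A \<le> 1"
  shows "0 \<le> (\<Sum>a\<in>A. p a * (ln (p a) - ln (q a)))"
proof -
  have "(\<Sum>a\<in>A. p a - q a) \<le> (\<Sum>a\<in>A. p a * (ln (p a) - ln (q a)))"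
  proof (rule sum_mono)
    fix a assume a: "a \<in> A"
    show "p a - q a \<le> p a * (ln (p a) - ln (q a))"
    proof (cases "p a = 0")
      case True then show ?thesis using assms(4)[OF a] by simp
    next
      case False
      then have pp: "0 < p a" using assms(2)[OF a] by simp
      have qq: "0 < q a" using assms(4)[OF a] .
      have "ln (q a / p a) \<le> q a / p a - 1" using ln_le_minus_one[of "q a / p a"] pp qq by simp
      then have "p a * ln (q a / p a) \<le> p a * (q a / p a - 1)" using pp by (simp add: mult_left_mono)
      moreover have "p a * (q a / p a - 1) = q a - p a" using pp by (simp add: field_simps)
      ultimately have "p a * (ln (q a) - ln (p a)) \<le> q a - p a"
        using pp qq by (simp add: ln_div)
      then show ?thesis by (simp add: algebra_simps)
    qed
  qed
  moreover have "(\<Sum>a\<in>A. p a - q a) \<ge> 0" using assms(3,5) by (simp add: sum_subtractf)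
  ultimately show ?thesis by linarith
qed

lemma entropy_le:
  fixes p :: "'a \<Rightarrow> real"
  assumes "finite A" "\<And>a. a \<in> A \<Longrightarrow> 0 \<le> p a" "sum p A = 1"
  shows "- (\<Sum>a\<in>A. p a * ln (p a)) \<le> ln (real (card A))"
proof -
  have ne: "A \<noteq> {}" using assms(3) by auto
  then have c: "card A > 0" using assms(1) by (simp add: card_gt_0_iff)
  have "0 \<le> (\<Sum>a\<in>A. p a * (ln (p a) - ln (1 / real (card A))))"
    by (rule gibbs) (use assms c in auto)
  also have "\<dots> = (\<Sum>a\<in>A. p a * ln (p a)) + ln (real (card A)) * sum p A"
    using c by (simp add: ln_div algebra_simps sum.distrib sum_distrib_left sum_distrib_right)
  finally show ?thesis using assms(3) by simp
qed

lemma CS_mu: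
  assumes fX: "finite X" and sub: "set_pmf \<mu> \<subseteq> X"
    and z: "\<And>x. x \<in> X \<Longrightarrow> pmf \<mu> x = 0 \<Longrightarrow> d x = 0"
  shows "\<bar>\<Sum>x\<in>X. d x * h x\<bar> \<le> sqrt (norm2_mu \<mu> (\<lambda>x. d x / pmf \<mu> x)) * sqrt (norm2_mu \<mu> h)"
proof -
  have n2: "norm2_mu \<mu> f = (\<Sum>x\<in>X. pmf \<mu> x * (f x)\<^sup>2)" for f
    unfolding norm2_mu_def by (rule exp_sum[OF fX sub])
  define a where "a x = sqrt (pmf \<mu> x) * (d x / pmf \<mu> x)" for x
  define b where "b x = sqrt (pmf \<mu> x) * h x" for x
  have ab: "d x * h x = a x * b x" if "x \<in> X" for x
  proof (cases "pmf \<mu> x = 0")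
    case True then show ?thesis using z[OF that] by (simp add: a_def b_def)
  next
    case False
    then have "0 < pmf \<mu> x" using pmf_nonneg[of \<mu> x] by linarith
    then show ?thesis unfolding a_def b_def
      by (simp add: field_simps)
  qed
  have a2: "(a x)\<^sup>2 = pmf \<mu> x * (d x / pmf \<mu> x)\<^sup>2" for x
    unfolding a_def by (simp only: power_mult_distrib real_sqrt_pow2[OF pmf_nonneg])
  have b2: "(b x)\<^sup>2 = pmf \<mu> x * (h x)\<^sup>2" for x
    unfolding b_def by (simp only: power_mult_distrib real_sqrt_pow2[OF pmf_nonneg])
  have "(\<Sum>x\<in>X. d x * h x)\<^sup>2 = (\<Sum>x\<in>X. a x * b x)\<^sup>2" using ab by simp
  also have "\<dots> \<le> (\<Sum>x\<in>X. (a x)\<^sup>2) * (\<Sum>x\<in>X. (b x)\<^sup>2)" by (rule Cauchy_Schwarz_ineq_sum)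
  also have "\<dots> = norm2_mu \<mu> (\<lambda>x. d x / pmf \<mu> x) * norm2_mu \<mu> h" by (simp add: n2 a2 b2)
  finally have "sqrt ((\<Sum>x\<in>X. d x * h x)\<^sup>2) \<le> sqrt (norm2_mu \<mu> (\<lambda>x. d x / pmf \<mu> x) * norm2_mu \<mu> h)"
    by (rule real_sqrt_le_mono)
  then show ?thesis by (simp add: real_sqrt_mult)
qed

context
  fixes S A \<gamma> P R Rmax d0
  assumes mdp: "finite_mdp S A \<gamma> P R Rmax d0"
begin

lemmas mdpfB = fS[OF mdp] fA[OF mdp] g0[OF mdp] g1[OF mdp] PS[OF mdp] d0S[OF mdp]
   state_supp[OF mdp] pol_supp[OF mdp] state_sum1[OF mdp] pol_sum1[OF mdp] state_step[OF mdp]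

lemma J_reg_sum:
  assumes pol: "policy S A \<pi>"
  shows "J_reg \<gamma> P R d0 lam \<pi> = (\<Sum>t. \<gamma>^t * (\<Sum>s\<in>S. pmf (state_pmf P d0 \<pi> t) s *
      (\<Sum>a\<in>A. pmf (\<pi> s) a * (R s a - lam * ln (pmf (\<pi> s) a)))))"
  unfolding J_reg_def
  apply (rule arg_cong[where f=suminf], rule ext)
  apply (subst exp_sum[OF mdpfB(1) state_supp[OF mdp pol]])
  apply (intro arg_cong2[where f="(*)"] refl sum.cong)
  apply (rule exp_sum[OF mdpfB(2) mdpfB(8)[OF pol]], assumption)
  done

lemma geom_bound_summable:
  fixes f :: "nat \<Rightarrow> real"
  assumes "\<And>t. \<bar>f t\<bar> \<le> B"
  shows "summable (\<lambda>t. \<gamma>^t * f t)"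
proof (rule summable_comparison_test)
  show "\<exists>N. \<forall>n\<ge>N. norm (\<gamma>^n * f n) \<le> \<gamma>^n * B"
    using assms mdpfB(3) by (auto simp: abs_mult intro!: mult_left_mono)
  show "summable (\<lambda>n. \<gamma>^n * B)"
    using mdpfB(3,4) by (intro summable_mult2 summable_geometric) simp
qed

lemma telescope:
  assumes pol: "policy S A \<pi>"
  shows "J_reg \<gamma> P R d0 lam \<pi> = (\<Sum>s\<in>S. pmf d0 s * V s)
     - (\<Sum>t. \<gamma>^t * (\<Sum>s\<in>S. pmf (state_pmf P d0 \<pi> t) s *
         (\<Sum>a\<in>A. pmf (\<pi> s) a * (V s - consist \<gamma> P R lam \<pi> V (s,a)))))"
proof -
  define p where "p t = state_pmf P d0 \<pi> t" for t
  define c where "c s a = (\<Sum>s'\<in>S. pmf (P s a) s' * V s')" for s a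
  define b where "b t = (\<Sum>s\<in>S. pmf (p t) s * V s)" for t
  define e where "e t = (\<Sum>s\<in>S. pmf (p t) s * (\<Sum>a\<in>A. pmf (\<pi> s) a * (V s - consist \<gamma> P R lam \<pi> V (s,a))))" for t
  have cons: "consist \<gamma> P R lam \<pi> V (s,a) = R s a + \<gamma> * c s a - lam * ln (pmf (\<pi> s) a)"
    if "s \<in> S" "a \<in> A" for s a
    unfolding consist_def c_def using exp_sum[OF mdpfB(1) mdpfB(5)[OF that]] by simp
  have step: "(\<Sum>s\<in>S. pmf (p t) s * (\<Sum>a\<in>A. pmf (\<pi> s) a * (R s a - lam * ln (pmf (\<pi> s) a))))
      = b t - e t - \<gamma> * b (Suc t)" for t
  proof -
    have inner: "(\<Sum>a\<in>A. pmf (\<pi> s) a * (R s a - lam * ln (pmf (\<pi> s) a)))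
       = V s - (\<Sum>a\<in>A. pmf (\<pi> s) a * (V s - consist \<gamma> P R lam \<pi> V (s,a))) - \<gamma> * (\<Sum>a\<in>A. pmf (\<pi> s) a * c s a)"
      if s: "s \<in> S" for s
    proof -
      have "(\<Sum>a\<in>A. pmf (\<pi> s) a * (R s a - lam * ln (pmf (\<pi> s) a)))
         = (\<Sum>a\<in>A. pmf (\<pi> s) a * V s - pmf (\<pi> s) a * (V s - consist \<gamma> P R lam \<pi> V (s,a)) - \<gamma> * (pmf (\<pi> s) a * c s a))"
        by (rule sum.cong[OF refl]) (simp add: cons[OF s] algebra_simps)
      also have "\<dots> = V s * (\<Sum>a\<in>A. pmf (\<pi> s) a) - (\<Sum>a\<in>A. pmf (\<pi> s) a * (V s - consist \<gamma> P R lam \<pi> V (s,a))) - \<gamma> * (\<Sum>a\<in>A. pmf (\<pi> s) a * c s a)"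
        by (simp add: sum_subtractf sum_distrib_left sum_distrib_right mult.commute)
      finally show ?thesis using mdpfB(10)[OF pol s] by simp
    qed
    have "(\<Sum>s\<in>S. pmf (p t) s * (\<Sum>a\<in>A. pmf (\<pi> s) a * (R s a - lam * ln (pmf (\<pi> s) a))))
       = (\<Sum>s\<in>S. pmf (p t) s * V s - pmf (p t) s * (\<Sum>a\<in>A. pmf (\<pi> s) a * (V s - consist \<gamma> P R lam \<pi> V (s,a))) - \<gamma> * (pmf (p t) s * (\<Sum>a\<in>A. pmf (\<pi> s) a * c s a)))"
      apply (rule sum.cong[OF refl]) apply (subst inner, assumption) by (simp add: algebra_simps)
    also have "\<dots> = b t - e t - \<gamma> * (\<Sum>s\<in>S. pmf (p t) s * (\<Sum>a\<in>A. pmf (\<pi> s) a * c s a))"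
      by (simp add: b_def e_def sum_subtractf sum_distrib_left)
    also have "(\<Sum>s\<in>S. pmf (p t) s * (\<Sum>a\<in>A. pmf (\<pi> s) a * c s a)) = b (Suc t)"
      unfolding b_def p_def c_def by (rule mdpfB(11)[OF pol, symmetric])
    finally show ?thesis .
  qed
  have bB: "\<bar>b t\<bar> \<le> (\<Sum>s\<in>S. \<bar>V s\<bar>)" for t
    unfolding b_def by (rule abs_pmf_sum_le[OF mdpfB(1)])
  have eB: "\<bar>e t\<bar> \<le> (\<Sum>s\<in>S. \<Sum>a\<in>A. \<bar>V s - consist \<gamma> P R lam \<pi> V (s,a)\<bar>)" for t
  proof -
    have "\<bar>e t\<bar> \<le> (\<Sum>s\<in>S. \<bar>\<Sum>a\<in>A. pmf (\<pi> s) a * (V s - consist \<gamma> P R lam \<pi> V (s,a))\<bar>)"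
      unfolding e_def by (rule abs_pmf_sum_le[OF mdpfB(1)])
    also have "\<dots> \<le> (\<Sum>s\<in>S. \<Sum>a\<in>A. \<bar>V s - consist \<gamma> P R lam \<pi> V (s,a)\<bar>)"
      by (intro sum_mono abs_pmf_sum_le[OF mdpfB(2)])
    finally show ?thesis .
  qed
  have lim: "(\<lambda>t. \<gamma>^t * b t) \<longlonglongrightarrow> 0"
  proof (rule Lim_null_comparison)
    show "\<forall>\<^sub>F t in sequentially. norm (\<gamma>^t * b t) \<le> \<gamma>^t * (\<Sum>s\<in>S. \<bar>V s\<bar>)"
      using bB mdpfB(3) by (intro always_eventually allI) (auto simp: abs_mult intro!: mult_left_mono)
    show "(\<lambda>t. \<gamma>^t * (\<Sum>s\<in>S. \<bar>V s\<bar>)) \<longlonglongrightarrow> 0"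
      using mdpfB(3,4) by (intro tendsto_mult_left_zero LIMSEQ_power_zero) simp
  qed
  have s1: "(\<lambda>t. \<gamma>^t * b t - \<gamma>^(Suc t) * b (Suc t)) sums (\<gamma>^0 * b 0 - 0)"
    using telescope_sums'[OF lim] .
  have s2: "(\<lambda>t. \<gamma>^t * e t) sums (\<Sum>t. \<gamma>^t * e t)"
    by (rule summable_sums, rule geom_bound_summable, rule eB)
  have "(\<lambda>t. (\<gamma>^t * b t - \<gamma>^(Suc t) * b (Suc t)) - \<gamma>^t * e t) sums (\<gamma>^0 * b 0 - 0 - (\<Sum>t. \<gamma>^t * e t))"
    by (rule sums_diff[OF s1 s2])
  moreover have "(\<lambda>t. (\<gamma>^t * b t - \<gamma>^(Suc t) * b (Suc t)) - \<gamma>^t * e t)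
     = (\<lambda>t. \<gamma>^t * (\<Sum>s\<in>S. pmf (p t) s * (\<Sum>a\<in>A. pmf (\<pi> s) a * (R s a - lam * ln (pmf (\<pi> s) a)))))"
    by (rule ext, subst step) (simp add: algebra_simps)
  ultimately have "(\<lambda>t. \<gamma>^t * (\<Sum>s\<in>S. pmf (p t) s * (\<Sum>a\<in>A. pmf (\<pi> s) a * (R s a - lam * ln (pmf (\<pi> s) a)))))
      sums (b 0 - (\<Sum>t. \<gamma>^t * e t))" by simp
  then show ?thesis
    unfolding J_reg_sum[OF pol] by (simp add: sums_unique[symmetric] b_def e_def p_def)
qed

end


lemma norm2_nonneg: "0 \<le> norm2_mu \<mu> f"
  unfolding norm2_mu_def by simp

context
  fixes S A \<gamma> P R Rmax d0
  assumes mdp: "finite_mdp S A \<gamma> P R Rmax d0"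
begin

lemmas mdpfC = fS[OF mdp] fA[OF mdp] g0[OF mdp] g1[OF mdp] PS[OF mdp] d0S[OF mdp]
   state_supp[OF mdp] pol_supp[OF mdp] state_sum1[OF mdp] pol_sum1[OF mdp] state_step[OF mdp]

lemma occ_sum:
  assumes pol: "policy S A \<pi>"
  shows "(\<Sum>t. \<gamma>^t * (\<Sum>s\<in>S. pmf (state_pmf P d0 \<pi> t) s * (\<Sum>a\<in>A. pmf (\<pi> s) a * h (s,a))))
       = (\<Sum>x\<in>S \<times> A. occupancy \<gamma> P d0 \<pi> x * h x) / (1 - \<gamma>)"
proof -
  define Q where "Q s = (\<Sum>t. \<gamma>^t * pmf (state_pmf P d0 \<pi> t) s)" for s
  have sQ: "(\<lambda>t. \<gamma>^t * pmf (state_pmf P d0 \<pi> t) s) sums Q s" for s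
    unfolding Q_def
    by (rule summable_sums, rule geom_bound_summable[OF mdp, where B=1]) (simp add: pmf_le_1)
  have "(\<lambda>t. \<Sum>s\<in>S. \<Sum>a\<in>A. \<gamma>^t * pmf (state_pmf P d0 \<pi> t) s * (pmf (\<pi> s) a * h (s,a)))
     sums (\<Sum>s\<in>S. \<Sum>a\<in>A. Q s * (pmf (\<pi> s) a * h (s,a)))"
    by (intro sums_sum sums_mult2 sQ)
  moreover have "(\<lambda>t. \<Sum>s\<in>S. \<Sum>a\<in>A. \<gamma>^t * pmf (state_pmf P d0 \<pi> t) s * (pmf (\<pi> s) a * h (s,a)))
     = (\<lambda>t. \<gamma>^t * (\<Sum>s\<in>S. pmf (state_pmf P d0 \<pi> t) s * (\<Sum>a\<in>A. pmf (\<pi> s) a * h (s,a))))"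
    by (simp add: sum_distrib_left mult.assoc)
  ultimately have 1: "(\<Sum>t. \<gamma>^t * (\<Sum>s\<in>S. pmf (state_pmf P d0 \<pi> t) s * (\<Sum>a\<in>A. pmf (\<pi> s) a * h (s,a))))
     = (\<Sum>s\<in>S. \<Sum>a\<in>A. Q s * (pmf (\<pi> s) a * h (s,a)))" by (simp add: sums_iff)
  have "(\<Sum>x\<in>S \<times> A. occupancy \<gamma> P d0 \<pi> x * h x) = (\<Sum>s\<in>S. \<Sum>a\<in>A. occupancy \<gamma> P d0 \<pi> (s,a) * h (s,a))"
    by (simp add: sum.cartesian_product)
  also have "\<dots> = (1 - \<gamma>) * (\<Sum>s\<in>S. \<Sum>a\<in>A. Q s * (pmf (\<pi> s) a * h (s,a)))"
    by (simp add: occupancy_def Q_def sum_distrib_left mult.assoc)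
  finally show ?thesis using 1 mdpfC(4) by simp
qed

lemma jterm_bound:
  "\<bar>\<Sum>s\<in>S. pmf (state_pmf P d0 \<pi> t) s * (\<Sum>a\<in>A. pmf (\<pi> s) a * h s a)\<bar> \<le> (\<Sum>s\<in>S. \<Sum>a\<in>A. \<bar>h s a\<bar>)"
proof -
  have "\<bar>\<Sum>s\<in>S. pmf (state_pmf P d0 \<pi> t) s * (\<Sum>a\<in>A. pmf (\<pi> s) a * h s a)\<bar> \<le> (\<Sum>s\<in>S. \<bar>\<Sum>a\<in>A. pmf (\<pi> s) a * h s a\<bar>)"
    by (rule abs_pmf_sum_le[OF mdpfC(1)])
  also have "\<dots> \<le> (\<Sum>s\<in>S. \<Sum>a\<in>A. \<bar>h s a\<bar>)"
    by (intro sum_mono abs_pmf_sum_le[OF mdpfC(2)])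
  finally show ?thesis .
qed

lemma jsum_summable:
  "summable (\<lambda>t. \<gamma>^t * (\<Sum>s\<in>S. pmf (state_pmf P d0 \<pi> t) s * (\<Sum>a\<in>A. pmf (\<pi> s) a * h s a)))"
  by (rule geom_bound_summable[OF mdp], rule jterm_bound)

lemma J_det:
  assumes det: "deterministic_policy S A \<pi>"
  shows "J_reg \<gamma> P R d0 lam \<pi> = J_ret \<gamma> P R d0 \<pi>"
proof -
  have pol: "policy S A \<pi>" using det by (simp add: deterministic_policy_def)
  have Z: "pmf (\<pi> s) a * ln (pmf (\<pi> s) a) = 0" if "s \<in> S" for s a
  proof -
    have "\<exists>a0. \<pi> s = return_pmf a0" using det that unfolding deterministic_policy_def by simp
    then obtain a0 where e: "\<pi> s = return_pmf a0" by (elim exE)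
    have "pmf (\<pi> s) a = 0 \<or> pmf (\<pi> s) a = 1" unfolding e by (simp add: indicator_def)
    then show ?thesis by (elim disjE) simp_all
  qed
  have W: "pmf (\<pi> s) a * (R s a - l * ln (pmf (\<pi> s) a)) = pmf (\<pi> s) a * R s a - l * (pmf (\<pi> s) a * ln (pmf (\<pi> s) a))" for s a l
    by (simp add: algebra_simps)
  have X: "(\<Sum>a\<in>A. pmf (\<pi> s) a * (R s a - lam * ln (pmf (\<pi> s) a))) = (\<Sum>a\<in>A. pmf (\<pi> s) a * (R s a - 0 * ln (pmf (\<pi> s) a)))"
    if "s \<in> S" for s
    by (rule sum.cong[OF refl]) (simp only: W Z[OF that])
  have Y: "(\<Sum>s\<in>S. pmf (state_pmf P d0 \<pi> t) s * (\<Sum>a\<in>A. pmf (\<pi> s) a * (R s a - lam * ln (pmf (\<pi> s) a))))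
      = (\<Sum>s\<in>S. pmf (state_pmf P d0 \<pi> t) s * (\<Sum>a\<in>A. pmf (\<pi> s) a * (R s a - 0 * ln (pmf (\<pi> s) a))))" for t
    by (rule sum.cong[OF refl]) (simp only: X)
  show ?thesis unfolding J_ret_def J_reg_sum[OF mdp pol] Y ..
qed

lemma J_ent:
  assumes pol: "policy S A \<pi>" and lam: "0 \<le> lam"
  shows "J_reg \<gamma> P R d0 lam \<pi> \<le> J_ret \<gamma> P R d0 \<pi> + lam * ln (real (card A)) / (1 - \<gamma>)"
proof -
  define K where "K = lam * ln (real (card A))"
  define j where "j l t = (\<Sum>s\<in>S. pmf (state_pmf P d0 \<pi> t) s * (\<Sum>a\<in>A. pmf (\<pi> s) a * (R s a - l * ln (pmf (\<pi> s) a))))" for l t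
  have le: "j lam t \<le> j 0 t + K" for t
  proof -
    have "j lam t = j 0 t + (\<Sum>s\<in>S. pmf (state_pmf P d0 \<pi> t) s * (lam * - (\<Sum>a\<in>A. pmf (\<pi> s) a * ln (pmf (\<pi> s) a))))"
    proof -
      have XY: "(\<Sum>a\<in>A. pmf (\<pi> s) a * (R s a - l * ln (pmf (\<pi> s) a))) =
         (\<Sum>a\<in>A. pmf (\<pi> s) a * R s a) - l * (\<Sum>a\<in>A. pmf (\<pi> s) a * ln (pmf (\<pi> s) a))" for s l
      proof -
        have "(\<Sum>a\<in>A. pmf (\<pi> s) a * (R s a - l * ln (pmf (\<pi> s) a))) =
           (\<Sum>a\<in>A. pmf (\<pi> s) a * R s a - l * (pmf (\<pi> s) a * ln (pmf (\<pi> s) a)))"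
          by (rule sum.cong[OF refl]) (simp add: algebra_simps)
        also have "\<dots> = (\<Sum>a\<in>A. pmf (\<pi> s) a * R s a) - l * (\<Sum>a\<in>A. pmf (\<pi> s) a * ln (pmf (\<pi> s) a))"
          by (simp only: sum_subtractf sum_distrib_left)
        finally show ?thesis .
      qed
      have "j lam t - j 0 t = (\<Sum>s\<in>S. pmf (state_pmf P d0 \<pi> t) s * (lam * - (\<Sum>a\<in>A. pmf (\<pi> s) a * ln (pmf (\<pi> s) a))))"
        unfolding j_def XY sum_subtractf[symmetric] by (rule sum.cong[OF refl]) (simp add: algebra_simps)
      then show ?thesis by linarith
    qed
    also have "\<dots> \<le> j 0 t + (\<Sum>s\<in>S. pmf (state_pmf P d0 \<pi> t) s * K)"
    proof -
      have "(\<Sum>s\<in>S. pmf (state_pmf P d0 \<pi> t) s * (lam * - (\<Sum>a\<in>A. pmf (\<pi> s) a * ln (pmf (\<pi> s) a))))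
          \<le> (\<Sum>s\<in>S. pmf (state_pmf P d0 \<pi> t) s * K)"
      proof (rule sum_mono)
        fix s assume s: "s \<in> S"
        have "- (\<Sum>a\<in>A. pmf (\<pi> s) a * ln (pmf (\<pi> s) a)) \<le> ln (real (card A))"
          by (rule entropy_le[OF mdpfC(2)]) (auto simp: mdpfC(10)[OF pol s])
        then have "lam * - (\<Sum>a\<in>A. pmf (\<pi> s) a * ln (pmf (\<pi> s) a)) \<le> K"
          unfolding K_def using lam by (intro mult_left_mono)
        then show "pmf (state_pmf P d0 \<pi> t) s * (lam * - (\<Sum>a\<in>A. pmf (\<pi> s) a * ln (pmf (\<pi> s) a)))
          \<le> pmf (state_pmf P d0 \<pi> t) s * K" by (rule mult_left_mono) simp
      qed
      then show ?thesis by simp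
    qed
    also have "(\<Sum>s\<in>S. pmf (state_pmf P d0 \<pi> t) s * K) = K"
      using mdpfC(9)[OF pol] by (simp add: sum_distrib_right[symmetric])
    finally show ?thesis .
  qed
  have s1: "(\<lambda>t. \<gamma>^t * j lam t) sums J_reg \<gamma> P R d0 lam \<pi>"
    unfolding J_reg_sum[OF mdp pol] j_def by (rule summable_sums, rule jsum_summable)
  have s0: "(\<lambda>t. \<gamma>^t * j 0 t) sums J_ret \<gamma> P R d0 \<pi>"
    unfolding J_ret_def J_reg_sum[OF mdp pol] j_def by (rule summable_sums, rule jsum_summable)
  have sg: "(\<lambda>t. \<gamma>^t * K) sums (K / (1 - \<gamma>))"
    using sums_mult2[OF geometric_sums[of \<gamma>], of K] mdpfC(3,4) by simp
  have A1: "(\<lambda>t. \<gamma>^t * j 0 t + \<gamma>^t * K) sums (J_ret \<gamma> P R d0 \<pi> + K / (1 - \<gamma>))"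
    by (rule sums_add[OF s0 sg])
  have A2: "\<forall>t. \<gamma>^t * j lam t \<le> \<gamma>^t * j 0 t + \<gamma>^t * K"
  proof
    fix t
    have "\<gamma>^t * j lam t \<le> \<gamma>^t * (j 0 t + K)" using le[of t] mdpfC(3) by (intro mult_left_mono) auto
    then show "\<gamma>^t * j lam t \<le> \<gamma>^t * j 0 t + \<gamma>^t * K" by (simp add: distrib_left)
  qed
  have "J_reg \<gamma> P R d0 lam \<pi> \<le> J_ret \<gamma> P R d0 \<pi> + K / (1 - \<gamma>)"
    by (rule sums_le[OF spec[OF A2] s1 A1])
  then show ?thesis unfolding K_def .
qed

end


context
  fixes S A \<gamma> P R Rmax d0
  assumes mdp: "finite_mdp S A \<gamma> P R Rmax d0"
begin

lemmas mdpfD = fS[OF mdp] fA[OF mdp] g0[OF mdp] g1[OF mdp] PS[OF mdp] d0S[OF mdp]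
   state_supp[OF mdp] pol_supp[OF mdp] state_sum1[OF mdp] pol_sum1[OF mdp] state_step[OF mdp]

lemma gap:
  assumes det: "deterministic_policy S A pistar"
    and polL: "policy S A pistar_lam"
    and optL: "J_reg \<gamma> P R d0 lam pistar \<le> J_reg \<gamma> P R d0 lam pistar_lam"
    and polH: "policy S A pihat" and posH: "\<And>s a. s \<in> S \<Longrightarrow> a \<in> A \<Longrightarrow> 0 < pmf (pihat s) a"
    and lam: "0 < lam"
    and muS: "set_pmf \<mu> \<subseteq> S \<times> A"
    and covL: "\<And>x. x \<in> S \<times> A \<Longrightarrow> pmf \<mu> x = 0 \<Longrightarrow> occupancy \<gamma> P d0 pistar_lam x = 0"
    and covH: "\<And>x. x \<in> S \<times> A \<Longrightarrow> pmf \<mu> x = 0 \<Longrightarrow> occupancy \<gamma> P d0 pihat x = 0"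
    and NL: "norm2_mu \<mu> (\<lambda>x. occupancy \<gamma> P d0 pistar_lam x / pmf \<mu> x) \<le> C"
    and NH: "norm2_mu \<mu> (\<lambda>x. occupancy \<gamma> P d0 pihat x / pmf \<mu> x) \<le> C"
    and small: "16 * C * norm2_mu \<mu> (\<lambda>(s,a). V s - consist \<gamma> P R lam pihat V (s,a)) \<le> \<epsilon>\<^sup>2 * (1 - \<gamma>)\<^sup>2"
    and lame: "2 * lam * ln (real (card A)) \<le> (1 - \<gamma>) * \<epsilon>"
    and eps: "0 < \<epsilon>"
  shows "J_ret \<gamma> P R d0 pistar - J_ret \<gamma> P R d0 pihat \<le> \<epsilon>"
proof -
  define h where "h = (\<lambda>(s,a). V s - consist \<gamma> P R lam pihat V (s,a))"
  define \<Delta> where "\<Delta> = norm2_mu \<mu> h"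
  define b0 where "b0 = (\<Sum>s\<in>S. pmf d0 s * V s)"
  define ser where "ser \<pi> f = (\<Sum>t. \<gamma>^t * (\<Sum>s\<in>S. pmf (state_pmf P d0 \<pi> t) s * (\<Sum>a\<in>A. pmf (\<pi> s) a * f s a)))" for \<pi> f
  have g1: "0 < 1 - \<gamma>" using mdpfD(4) by simp
  have C0: "0 \<le> C" using NL norm2_nonneg order_trans by blast
  have D0: "0 \<le> \<Delta>" unfolding \<Delta>_def by (rule norm2_nonneg)
  have TL: "J_reg \<gamma> P R d0 lam pistar_lam = b0 - ser pistar_lam (\<lambda>s a. V s - consist \<gamma> P R lam pistar_lam V (s,a))"
    unfolding b0_def ser_def by (rule telescope[OF mdp polL])
  have TH: "J_reg \<gamma> P R d0 lam pihat = b0 - ser pihat (\<lambda>s a. h (s,a))"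
    unfolding b0_def ser_def h_def by (simp add: telescope[OF mdp polH])
  have inner: "(\<Sum>a\<in>A. pmf (pistar_lam s) a * h (s,a)) \<le> (\<Sum>a\<in>A. pmf (pistar_lam s) a * (V s - consist \<gamma> P R lam pistar_lam V (s,a)))"
    if s: "s \<in> S" for s
  proof -
    have e: "pmf (pistar_lam s) a * (V s - consist \<gamma> P R lam pistar_lam V (s,a))
       = pmf (pistar_lam s) a * h (s,a) + lam * (pmf (pistar_lam s) a * (ln (pmf (pistar_lam s) a) - ln (pmf (pihat s) a)))" for a
      unfolding h_def consist_def by (simp add: algebra_simps)
    have "0 \<le> (\<Sum>a\<in>A. pmf (pistar_lam s) a * (ln (pmf (pistar_lam s) a) - ln (pmf (pihat s) a)))"
      by (rule gibbs[OF mdpfD(2)]) (auto simp: mdpfD(10)[OF polL s] mdpfD(10)[OF polH s] posH[OF s])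
    then have "0 \<le> lam * (\<Sum>a\<in>A. pmf (pistar_lam s) a * (ln (pmf (pistar_lam s) a) - ln (pmf (pihat s) a)))"
      using lam by simp
    then show ?thesis by (simp only: e sum.distrib sum_distrib_left[symmetric])
  qed
  have serle: "ser pistar_lam (\<lambda>s a. h (s,a)) \<le> ser pistar_lam (\<lambda>s a. V s - consist \<gamma> P R lam pistar_lam V (s,a))"
    unfolding ser_def
  proof (rule suminf_le[OF _ jsum_summable[OF mdp] jsum_summable[OF mdp]])
    fix t
    show "\<gamma>^t * (\<Sum>s\<in>S. pmf (state_pmf P d0 pistar_lam t) s * (\<Sum>a\<in>A. pmf (pistar_lam s) a * h (s,a)))
      \<le> \<gamma>^t * (\<Sum>s\<in>S. pmf (state_pmf P d0 pistar_lam t) s * (\<Sum>a\<in>A. pmf (pistar_lam s) a * (V s - consist \<gamma> P R lam pistar_lam V (s,a))))"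
      using mdpfD(3) by (intro mult_left_mono sum_mono inner) auto
  qed
  have occ: "\<bar>ser \<pi> (\<lambda>s a. h (s,a))\<bar> \<le> sqrt C * sqrt \<Delta> / (1 - \<gamma>)"
    if pol: "policy S A \<pi>" and cov: "\<And>x. x \<in> S \<times> A \<Longrightarrow> pmf \<mu> x = 0 \<Longrightarrow> occupancy \<gamma> P d0 \<pi> x = 0"
      and N: "norm2_mu \<mu> (\<lambda>x. occupancy \<gamma> P d0 \<pi> x / pmf \<mu> x) \<le> C" for \<pi>
  proof -
    have "ser \<pi> (\<lambda>s a. h (s,a)) = (\<Sum>x\<in>S \<times> A. occupancy \<gamma> P d0 \<pi> x * h x) / (1 - \<gamma>)"
      unfolding ser_def by (rule occ_sum[OF mdp pol])
    moreover have "\<bar>\<Sum>x\<in>S \<times> A. occupancy \<gamma> P d0 \<pi> x * h x\<bar> \<le> sqrt C * sqrt \<Delta>"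
    proof -
      have "\<bar>\<Sum>x\<in>S \<times> A. occupancy \<gamma> P d0 \<pi> x * h x\<bar>
          \<le> sqrt (norm2_mu \<mu> (\<lambda>x. occupancy \<gamma> P d0 \<pi> x / pmf \<mu> x)) * sqrt (norm2_mu \<mu> h)"
        by (rule CS_mu) (use mdpfD(1,2) muS cov in auto)
      also have "\<dots> \<le> sqrt C * sqrt \<Delta>"
        unfolding \<Delta>_def using N by (intro mult_right_mono real_sqrt_le_mono) (auto simp: norm2_nonneg)
      finally show ?thesis .
    qed
    ultimately show ?thesis using g1 by (simp add: divide_right_mono)
  qed
  have oL: "\<bar>ser pistar_lam (\<lambda>s a. h (s,a))\<bar> \<le> sqrt C * sqrt \<Delta> / (1 - \<gamma>)"
    by (rule occ[OF polL covL NL])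
  have oH: "\<bar>ser pihat (\<lambda>s a. h (s,a))\<bar> \<le> sqrt C * sqrt \<Delta> / (1 - \<gamma>)"
    by (rule occ[OF polH covH NH])
  have polS: "policy S A pistar" using det by (simp add: deterministic_policy_def)
  have J1: "J_ret \<gamma> P R d0 pistar \<le> b0 - ser pistar_lam (\<lambda>s a. h (s,a))"
    using J_det[OF mdp det, of lam] optL TL serle by linarith
  have J2: "J_ret \<gamma> P R d0 pihat \<ge> b0 - ser pihat (\<lambda>s a. h (s,a)) - lam * ln (real (card A)) / (1 - \<gamma>)"
    using J_ent[OF mdp polH, of lam] lam TH by linarith
  have sq: "sqrt C * sqrt \<Delta> \<le> \<epsilon> * (1 - \<gamma>) / 4"
  proof -
    have "C * \<Delta> \<le> (\<epsilon> * (1 - \<gamma>) / 4)\<^sup>2" using small unfolding \<Delta>_def h_def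
      by (simp add: power_mult_distrib power_divide)
    then have "sqrt (C * \<Delta>) \<le> sqrt ((\<epsilon> * (1 - \<gamma>) / 4)\<^sup>2)" by (rule real_sqrt_le_mono)
    also have "\<dots> = \<epsilon> * (1 - \<gamma>) / 4" using eps g1 by simp
    finally show ?thesis by (simp add: real_sqrt_mult)
  qed
  have q1: "sqrt C * sqrt \<Delta> / (1 - \<gamma>) \<le> \<epsilon> / 4"
    using sq g1 by (simp add: divide_le_eq mult.commute)
  have q2: "lam * ln (real (card A)) / (1 - \<gamma>) \<le> \<epsilon> / 2"
    using lame g1 by (simp add: divide_le_eq algebra_simps)
  show ?thesis using J1 J2 oL oH q1 q2 by linarith
qed

end


lemma ds_nn:
  fixes U :: "nat \<times> nat \<times> nat \<Rightarrow> real"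
  shows "(\<integral>\<^sup>+D. ennreal (exp (- t * sum_list (map U D))) \<partial>measure_pmf (dataset_pmf \<mu> P n))
      = (\<integral>\<^sup>+x. ennreal (exp (- t * U x)) \<partial>measure_pmf (sample_pmf \<mu> P)) ^ n"
proof (induction n)
  case 0 then show ?case by simp
next
  case (Suc n)
  have e: "ennreal (exp (- (t * (U x + s)))) = ennreal (exp (- (t * U x))) * ennreal (exp (- (t * s)))" for x s
    by (simp add: ennreal_mult[symmetric] exp_add[symmetric] algebra_simps)
  have "(\<integral>\<^sup>+D. ennreal (exp (- t * sum_list (map U D))) \<partial>measure_pmf (dataset_pmf \<mu> P (Suc n)))
     = (\<integral>\<^sup>+x. \<integral>\<^sup>+xs. ennreal (exp (- t * U x)) * ennreal (exp (- t * sum_list (map U xs))) \<partial>measure_pmf (dataset_pmf \<mu> P n) \<partial>measure_pmf (sample_pmf \<mu> P))"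
    by (simp add: e)
  also have "\<dots> = (\<integral>\<^sup>+x. ennreal (exp (- t * U x)) * (\<integral>\<^sup>+xs. ennreal (exp (- t * sum_list (map U xs))) \<partial>measure_pmf (dataset_pmf \<mu> P n)) \<partial>measure_pmf (sample_pmf \<mu> P))"
    by (subst nn_integral_cmult) auto
  also have "\<dots> = (\<integral>\<^sup>+x. ennreal (exp (- t * U x)) \<partial>measure_pmf (sample_pmf \<mu> P)) * (\<integral>\<^sup>+xs. ennreal (exp (- t * sum_list (map U xs))) \<partial>measure_pmf (dataset_pmf \<mu> P n))"
    by (subst nn_integral_multc) auto
  finally show ?case using Suc by (simp add: mult.commute)
qed

lemma chernoff:
  fixes U :: "nat \<times> nat \<times> nat \<Rightarrow> real"
  assumes t: "0 \<le> t" and m: "0 \<le> m"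
    and Iq: "(\<integral>\<^sup>+x. ennreal (exp (- t * U x)) \<partial>measure_pmf (sample_pmf \<mu> P)) \<le> ennreal m"
  shows "measure_pmf.prob (dataset_pmf \<mu> P n) {D. sum_list (map U D) \<le> 0} \<le> m ^ n"
proof -
  let ?B = "{D. sum_list (map U D) \<le> 0}"
  have "ennreal (measure_pmf.prob (dataset_pmf \<mu> P n) ?B) = emeasure (measure_pmf (dataset_pmf \<mu> P n)) ?B"
    by (simp add: measure_pmf.emeasure_eq_measure)
  also have "\<dots> = (\<integral>\<^sup>+D. indicator ?B D \<partial>measure_pmf (dataset_pmf \<mu> P n))" by simp
  also have "\<dots> \<le> (\<integral>\<^sup>+D. ennreal (exp (- t * sum_list (map U D))) \<partial>measure_pmf (dataset_pmf \<mu> P n))"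
  proof (rule nn_integral_mono)
    fix D
    show "indicator ?B D \<le> ennreal (exp (- t * sum_list (map U D)))"
    proof (cases "D \<in> ?B")
      case True
      then have "0 \<le> - t * sum_list (map U D)" using t by (simp add: mult_nonneg_nonpos)
      then have "1 \<le> exp (- t * sum_list (map U D))" by simp
      then show ?thesis using True by simp
    next
      case False then show ?thesis by simp
    qed
  qed
  also have "\<dots> = (\<integral>\<^sup>+x. ennreal (exp (- t * U x)) \<partial>measure_pmf (sample_pmf \<mu> P)) ^ n"
    by (rule ds_nn)
  also have "\<dots> \<le> ennreal m ^ n" by (intro power_mono Iq) simp
  also have "\<dots> = ennreal (m ^ n)" using m by (simp add: ennreal_power)
  finally show ?thesis using m by (simp add: ennreal_le_iff)
qed

lemma ds_supp:
  "D \<in> set_pmf (dataset_pmf \<mu> P n) \<Longrightarrow> length D = n \<and>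
     (\<forall>x\<in>set D. (fst x, fst (snd x)) \<in> set_pmf \<mu> \<and> snd (snd x) \<in> set_pmf (P (fst x) (fst (snd x))))"
proof (induction n arbitrary: D)
  case 0 then show ?case by simp
next
  case (Suc n)
  then obtain x xs where D: "D = x # xs" and x: "x \<in> set_pmf (sample_pmf \<mu> P)" and xs: "xs \<in> set_pmf (dataset_pmf \<mu> P n)"
    by auto
  have "(fst x, fst (snd x)) \<in> set_pmf \<mu> \<and> snd (snd x) \<in> set_pmf (P (fst x) (fst (snd x)))"
    using x by (auto simp: sample_pmf_def)
  then show ?case using Suc.IH[OF xs] D by auto
qed

lemma nn_sample:
  fixes f :: "nat \<times> nat \<times> nat \<Rightarrow> real"
  assumes fS: "finite S" and fA: "finite A" and muS: "set_pmf \<mu> \<subseteq> S \<times> A"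
    and PS: "\<And>s a. s \<in> S \<Longrightarrow> a \<in> A \<Longrightarrow> set_pmf (P s a) \<subseteq> S"
    and nn: "\<And>x. 0 \<le> f x"
  shows "(\<integral>\<^sup>+x. ennreal (f x) \<partial>measure_pmf (sample_pmf \<mu> P))
     = ennreal (\<Sum>s\<in>S. \<Sum>a\<in>A. pmf \<mu> (s,a) * (\<Sum>s'\<in>S. pmf (P s a) s' * f (s,a,s')))"
proof -
  have inner: "(\<integral>\<^sup>+s'. ennreal (f (s,a,s')) \<partial>measure_pmf (P s a)) = ennreal (\<Sum>s'\<in>S. pmf (P s a) s' * f (s,a,s'))"
    if "s \<in> S" "a \<in> A" for s a
  proof -
    have "(\<integral>\<^sup>+s'. ennreal (f (s,a,s')) \<partial>measure_pmf (P s a)) = (\<Sum>s'\<in>S. ennreal (f (s,a,s')) * ennreal (pmf (P s a) s'))"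
      by (rule nn_integral_measure_pmf_support) (use fS PS[OF that] in auto)
    also have "\<dots> = ennreal (\<Sum>s'\<in>S. pmf (P s a) s' * f (s,a,s'))"
      using nn by (simp add: ennreal_mult[symmetric] mult.commute)
    finally show ?thesis .
  qed
  have "(\<integral>\<^sup>+x. ennreal (f x) \<partial>measure_pmf (sample_pmf \<mu> P))
     = (\<integral>\<^sup>+y. (\<integral>\<^sup>+s'. ennreal (f (fst y, snd y, s')) \<partial>measure_pmf (P (fst y) (snd y))) \<partial>measure_pmf \<mu>)"
    unfolding sample_pmf_def by (simp add: case_prod_beta)
  also have "\<dots> = (\<Sum>y\<in>S \<times> A. (\<integral>\<^sup>+s'. ennreal (f (fst y, snd y, s')) \<partial>measure_pmf (P (fst y) (snd y))) * ennreal (pmf \<mu> y))"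
    by (rule nn_integral_measure_pmf_support) (use fS fA muS in auto)
  also have "\<dots> = (\<Sum>y\<in>S \<times> A. ennreal (pmf \<mu> y * (\<Sum>s'\<in>S. pmf (P (fst y) (snd y)) s' * f (fst y, snd y, s'))))"
    by (rule sum.cong[OF refl]) (auto simp: inner ennreal_mult[symmetric] mult.commute nn sum_nonneg)
  also have "\<dots> = ennreal (\<Sum>y\<in>S \<times> A. pmf \<mu> y * (\<Sum>s'\<in>S. pmf (P (fst y) (snd y)) s' * f (fst y, snd y, s')))"
    by (rule sum_ennreal) (simp add: nn sum_nonneg)
  also have "(\<Sum>y\<in>S \<times> A. pmf \<mu> y * (\<Sum>s'\<in>S. pmf (P (fst y) (snd y)) s' * f (fst y, snd y, s')))
      = (\<Sum>s\<in>S. \<Sum>a\<in>A. pmf \<mu> (s,a) * (\<Sum>s'\<in>S. pmf (P s a) s' * f (s,a,s')))"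
    by (simp add: sum.cartesian_product split_beta)
  finally show ?thesis .
qed


definition uu :: "real \<Rightarrow> (nat \<Rightarrow> nat \<Rightarrow> real) \<Rightarrow> real \<Rightarrow> (nat \<Rightarrow> real) \<Rightarrow> (nat \<Rightarrow> nat pmf)
    \<Rightarrow> (nat \<times> nat \<Rightarrow> real) \<Rightarrow> nat \<times> nat \<times> nat \<Rightarrow> real" where
  "uu \<gamma> R lam V \<pi> g = (\<lambda>(s,a,s'). (V s - R s a - \<gamma> * V s' + lam * ln (pmf (\<pi> s) a))\<^sup>2
      - (g (s,a) - R s a - \<gamma> * V s' + lam * ln (pmf (\<pi> s) a))\<^sup>2)"

lemma exp_quad:
  fixes x :: real
  assumes "\<bar>x\<bar> \<le> 1"
  shows "exp (- x) \<le> 1 - x + x\<^sup>2"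
proof (cases "x \<le> 0")
  case True
  then have "exp (- x) \<le> 1 + (- x) + (- x)\<^sup>2" using assms by (intro exp_bound) auto
  then show ?thesis by simp
next
  case False
  then have x: "0 < x" by simp
  have "1 + x \<le> exp x" by (rule exp_ge_add_one_self)
  then have "exp (- x) \<le> 1 / (1 + x)" using x
    by (simp add: exp_minus inverse_eq_divide divide_le_eq)
  also have "\<dots> \<le> 1 - x + x\<^sup>2"
  proof -
    have "1 \<le> (1 + x) * (1 - x + x\<^sup>2)" using x by (simp add: algebra_simps power2_eq_square power3_eq_cube)
    then show ?thesis using x by (simp add: divide_le_eq mult.commute)
  qed
  finally show ?thesis .
qed

lemma u_bound:
  fixes a b y Vm :: real
  assumes "0 \<le> a" "a \<le> Vm" "0 \<le> b" "b \<le> 2 * Vm" "- Vm \<le> y" "y \<le> 2 * Vm"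
  shows "\<bar>(a - y)\<^sup>2 - (b - y)\<^sup>2\<bar> \<le> 12 * Vm\<^sup>2" and "((a - y)\<^sup>2 - (b - y)\<^sup>2)\<^sup>2 \<le> 36 * Vm\<^sup>2 * (a - b)\<^sup>2"
proof -
  have f: "(a - y)\<^sup>2 - (b - y)\<^sup>2 = (a - b) * (a + b - 2 * y)" by (simp add: power2_eq_square algebra_simps)
  have h1: "\<bar>a - b\<bar> \<le> 2 * Vm" using assms by auto
  have h2: "\<bar>a + b - 2 * y\<bar> \<le> 6 * Vm" using assms by auto
  have "\<bar>(a - b) * (a + b - 2 * y)\<bar> \<le> (2 * Vm) * (6 * Vm)"
    unfolding abs_mult by (rule mult_mono[OF h1 h2]) (use assms in auto)
  then show "\<bar>(a - y)\<^sup>2 - (b - y)\<^sup>2\<bar> \<le> 12 * Vm\<^sup>2" unfolding f by (simp add: power2_eq_square)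
  have "(a + b - 2 * y)\<^sup>2 \<le> (6 * Vm)\<^sup>2"
    using h2 by (metis abs_le_square_iff abs_of_nonneg abs_ge_zero order_trans power2_abs)
  then have "(a - b)\<^sup>2 * (a + b - 2 * y)\<^sup>2 \<le> (a - b)\<^sup>2 * (6 * Vm)\<^sup>2"
    by (rule mult_left_mono) simp
  moreover have "((a - y)\<^sup>2 - (b - y)\<^sup>2)\<^sup>2 = (a - b)\<^sup>2 * (a + b - 2 * y)\<^sup>2"
    by (simp only: f power_mult_distrib)
  moreover have "(a - b)\<^sup>2 * (6 * Vm)\<^sup>2 = 36 * Vm\<^sup>2 * (a - b)\<^sup>2" by (simp add: power_mult_distrib)
  ultimately show "((a - y)\<^sup>2 - (b - y)\<^sup>2)\<^sup>2 \<le> 36 * Vm\<^sup>2 * (a - b)\<^sup>2" by (simp add: mult.commute)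
qed

lemma sumP_u:
  fixes p v :: "nat \<Rightarrow> real"
  assumes "(\<Sum>s'\<in>S. p s') = 1"
  shows "(\<Sum>s'\<in>S. p s' * ((a - r - \<gamma> * v s' + l)\<^sup>2 - (b - r - \<gamma> * v s' + l)\<^sup>2))
      = (a - b) * (a + b - 2 * (r + \<gamma> * (\<Sum>s'\<in>S. p s' * v s') - l))"
proof -
  have e: "p s' * ((a - r - \<gamma> * v s' + l)\<^sup>2 - (b - r - \<gamma> * v s' + l)\<^sup>2)
     = (a - b) * (a + b - 2 * r + 2 * l) * p s' - 2 * \<gamma> * (a - b) * (p s' * v s')" for s'
    by (simp add: power2_eq_square algebra_simps)
  have "(\<Sum>s'\<in>S. p s' * ((a - r - \<gamma> * v s' + l)\<^sup>2 - (b - r - \<gamma> * v s' + l)\<^sup>2))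
     = (a - b) * (a + b - 2 * r + 2 * l) * (\<Sum>s'\<in>S. p s') - 2 * \<gamma> * (a - b) * (\<Sum>s'\<in>S. p s' * v s')"
    by (simp only: e sum_subtractf sum_distrib_left)
  then show ?thesis using assms by (simp add: algebra_simps)
qed

lemma loss_diff:
  "loss_L \<gamma> R lam D V \<pi> - loss_R \<gamma> R lam D g V \<pi> = sum_list (map (uu \<gamma> R lam V \<pi> g) D) / real (length D)"
proof -
  have "sum_list (map (uu \<gamma> R lam V \<pi> g) D) = (\<Sum>(s, a, s')\<leftarrow>D. (V s - R s a - \<gamma> * V s' + lam * ln (pmf (\<pi> s) a))\<^sup>2)
     - (\<Sum>(s, a, s')\<leftarrow>D. (g (s, a) - R s a - \<gamma> * V s' + lam * ln (pmf (\<pi> s) a))\<^sup>2)"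
    by (induction D) (auto simp: uu_def)
  then show ?thesis
    unfolding loss_L_def loss_R_def by (simp add: diff_divide_distrib)
qed

lemma emp:
  assumes out: "sbeed_output \<gamma> R lam Vc Pc Gc D V \<pi>"
    and V0: "V0 \<in> Vc" and \<pi>0: "\<pi>0 \<in> Pc" and gh: "gh \<in> Gc" and fG: "finite Gc"
  shows "\<exists>g'\<in>Gc. sum_list (map (uu \<gamma> R lam V \<pi> gh) D) \<le> sum_list (map (uu \<gamma> R lam V0 \<pi>0 g') D)"
proof -
  have obj: "sbeed_obj \<gamma> R lam Gc D V' \<pi>' = Max ((\<lambda>g. sum_list (map (uu \<gamma> R lam V' \<pi>' g) D) / real (length D)) ` Gc)" for V' \<pi>'
    unfolding sbeed_obj_def loss_diff ..
  have ne: "Gc \<noteq> {}" using gh by auto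
  have "sum_list (map (uu \<gamma> R lam V \<pi> gh) D) / real (length D) \<le> sbeed_obj \<gamma> R lam Gc D V \<pi>"
    unfolding obj using fG gh by (intro Max_ge) auto
  moreover obtain g' where g': "g' \<in> Gc"
    and e: "sbeed_obj \<gamma> R lam Gc D V0 \<pi>0 = sum_list (map (uu \<gamma> R lam V0 \<pi>0 g') D) / real (length D)"
  proof -
    have "Max ((\<lambda>g. sum_list (map (uu \<gamma> R lam V0 \<pi>0 g) D) / real (length D)) ` Gc)
        \<in> (\<lambda>g. sum_list (map (uu \<gamma> R lam V0 \<pi>0 g) D) / real (length D)) ` Gc"
      using fG ne by (intro Max_in) auto
    then show ?thesis using that unfolding obj by auto
  qed
  moreover have "sbeed_obj \<gamma> R lam Gc D V \<pi> \<le> sbeed_obj \<gamma> R lam Gc D V0 \<pi>0"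
    using out V0 \<pi>0 unfolding sbeed_output_def by blast
  ultimately have le: "sum_list (map (uu \<gamma> R lam V \<pi> gh) D) / real (length D)
      \<le> sum_list (map (uu \<gamma> R lam V0 \<pi>0 g') D) / real (length D)" by linarith
  show ?thesis
  proof (cases "D = []")
    case True then show ?thesis using g' by auto
  next
    case False
    then have "0 < real (length D)" by simp
    then show ?thesis using le g' by (auto simp: divide_le_cancel)
  qed
qed


lemma sq_diff_le: "((x::real) - y)\<^sup>2 \<le> 2 * x\<^sup>2 + 2 * y\<^sup>2"
proof -
  have "0 \<le> (x + y)\<^sup>2" by simp
  moreover have "(x + y)\<^sup>2 = x\<^sup>2 + 2 * x * y + y\<^sup>2" "(x - y)\<^sup>2 = x\<^sup>2 - 2 * x * y + y\<^sup>2"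
    by (simp_all add: power2_eq_square algebra_simps)
  ultimately show ?thesis by linarith
qed

lemma mgf:
  assumes mdp: "finite_mdp S A \<gamma> P R Rmax d0"
    and muS: "set_pmf \<mu> \<subseteq> S \<times> A"
    and Vmpos: "0 < Vm" and Rle: "Rmax \<le> (1 - \<gamma>) * Vm"
    and VV: "\<And>s. s \<in> S \<Longrightarrow> 0 \<le> V s \<and> V s \<le> Vm"
    and VV0: "\<And>s. s \<in> S \<Longrightarrow> 0 \<le> V0 s \<and> V0 s \<le> Vm"
    and Lp: "\<And>s a. s \<in> S \<Longrightarrow> a \<in> A \<Longrightarrow> \<bar>lam * ln (pmf (\<pi> s) a)\<bar> \<le> Vm"
    and Lp0: "\<And>s a. s \<in> S \<Longrightarrow> a \<in> A \<Longrightarrow> \<bar>lam * ln (pmf (\<pi>0 s) a)\<bar> \<le> Vm"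
    and gB: "\<And>x. x \<in> S \<times> A \<Longrightarrow> 0 \<le> gh x \<and> gh x \<le> 2 * Vm"
    and gB0: "\<And>x. x \<in> S \<times> A \<Longrightarrow> 0 \<le> g' x \<and> g' x \<le> 2 * Vm"
    and rh: "\<And>x. x \<in> set_pmf \<mu> \<Longrightarrow> gh x = consist \<gamma> P R lam \<pi> V x"
    and r0: "\<And>x. x \<in> set_pmf \<mu> \<Longrightarrow> V0 (fst x) = consist \<gamma> P R lam \<pi>0 V0 x"
  shows "(\<integral>\<^sup>+x. ennreal (exp (- (1 / (144 * Vm\<^sup>2)) * (uu \<gamma> R lam V \<pi> gh x - uu \<gamma> R lam V0 \<pi>0 g' x))) \<partial>measure_pmf (sample_pmf \<mu> P))
     \<le> ennreal (exp (- (norm2_mu \<mu> (\<lambda>(s,a). V s - consist \<gamma> P R lam \<pi> V (s,a)) / (288 * Vm\<^sup>2))))"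
proof -
  define t where "t = 1 / (144 * Vm\<^sup>2)"
  have t0: "0 < t" unfolding t_def using Vmpos by simp
  define U where "U x = uu \<gamma> R lam V \<pi> gh x - uu \<gamma> R lam V0 \<pi>0 g' x" for x
  define C where "C s a = consist \<gamma> P R lam \<pi> V (s,a)" for s a
  define m where "m s a = (V s - C s a)\<^sup>2 + (V0 s - g' (s,a))\<^sup>2" for s a
  have fS: "finite S" and fA: "finite A" and g0: "0 \<le> \<gamma>" and g1: "\<gamma> < 1"
    and PS: "\<And>s a. s \<in> S \<Longrightarrow> a \<in> A \<Longrightarrow> set_pmf (P s a) \<subseteq> S"
    and RR: "\<And>s a. s \<in> S \<Longrightarrow> a \<in> A \<Longrightarrow> 0 \<le> R s a \<and> R s a \<le> Rmax"
    using mdp by (auto simp: finite_mdp_def)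
  have S1: "(\<integral>\<^sup>+x. ennreal (exp (- t * U x)) \<partial>measure_pmf (sample_pmf \<mu> P))
      = ennreal (\<Sum>s\<in>S. \<Sum>a\<in>A. pmf \<mu> (s,a) * (\<Sum>s'\<in>S. pmf (P s a) s' * exp (- t * U (s,a,s'))))"
    by (rule nn_sample[OF fS fA muS PS]) auto
  have S2: "pmf \<mu> (s,a) * (\<Sum>s'\<in>S. pmf (P s a) s' * exp (- t * U (s,a,s'))) \<le> pmf \<mu> (s,a) * (1 - t / 2 * m s a)"
    if sa: "s \<in> S" "a \<in> A" for s a
  proof (cases "pmf \<mu> (s,a) = 0")
    case True then show ?thesis by simp
  next
    case False
    then have sup: "(s,a) \<in> set_pmf \<mu>" by (simp add: set_pmf_iff)
    define y where "y s' = R s a + \<gamma> * V s' - lam * ln (pmf (\<pi> s) a)" for s'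
    define y0 where "y0 s' = R s a + \<gamma> * V0 s' - lam * ln (pmf (\<pi>0 s) a)" for s'
    have Rl: "R s a + \<gamma> * Vm \<le> Vm" using RR[OF sa] Rle by (simp add: algebra_simps)
    have yb: "- Vm \<le> y s' \<and> y s' \<le> 2 * Vm" if "s' \<in> S" for s'
    proof -
      have "0 \<le> \<gamma> * V s'" "\<gamma> * V s' \<le> \<gamma> * Vm" using VV[OF that] g0 by (auto intro: mult_left_mono)
      then show ?thesis using Lp[OF sa] RR[OF sa] Rl unfolding y_def by (auto simp: abs_le_iff)
    qed
    have y0b: "- Vm \<le> y0 s' \<and> y0 s' \<le> 2 * Vm" if "s' \<in> S" for s'
    proof -
      have "0 \<le> \<gamma> * V0 s'" "\<gamma> * V0 s' \<le> \<gamma> * Vm" using VV0[OF that] g0 by (auto intro: mult_left_mono)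
      then show ?thesis using Lp0[OF sa] RR[OF sa] Rl unfolding y0_def by (auto simp: abs_le_iff)
    qed
    have u1: "uu \<gamma> R lam V \<pi> gh (s,a,s') = (V s - y s')\<^sup>2 - (gh (s,a) - y s')\<^sup>2" for s'
      unfolding uu_def y_def by (simp add: algebra_simps)
    have u2: "uu \<gamma> R lam V0 \<pi>0 g' (s,a,s') = (V0 s - y0 s')\<^sup>2 - (g' (s,a) - y0 s')\<^sup>2" for s'
      unfolding uu_def y0_def by (simp add: algebra_simps)
    have ghC: "gh (s,a) = C s a" using rh[OF sup] unfolding C_def by simp
    have B1: "\<bar>uu \<gamma> R lam V \<pi> gh (s,a,s')\<bar> \<le> 12 * Vm\<^sup>2 \<and> (uu \<gamma> R lam V \<pi> gh (s,a,s'))\<^sup>2 \<le> 36 * Vm\<^sup>2 * (V s - C s a)\<^sup>2"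
      if "s' \<in> S" for s'
      unfolding u1 ghC[symmetric] using u_bound[of "V s" Vm "gh (s,a)" "y s'"] VV[OF sa(1)] gB[of "(s,a)"] sa yb[OF that] by auto
    have B2: "\<bar>uu \<gamma> R lam V0 \<pi>0 g' (s,a,s')\<bar> \<le> 12 * Vm\<^sup>2 \<and> (uu \<gamma> R lam V0 \<pi>0 g' (s,a,s'))\<^sup>2 \<le> 36 * Vm\<^sup>2 * (V0 s - g' (s,a))\<^sup>2"
      if "s' \<in> S" for s'
      unfolding u2 using u_bound[of "V0 s" Vm "g' (s,a)" "y0 s'"] VV0[OF sa(1)] gB0[of "(s,a)"] sa y0b[OF that] by auto
    have pw: "exp (- t * U (s,a,s')) \<le> 1 - t * U (s,a,s') + t\<^sup>2 * (72 * Vm\<^sup>2 * m s a)" if s': "s' \<in> S" for s'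
    proof -
      have aU: "\<bar>U (s,a,s')\<bar> \<le> 24 * Vm\<^sup>2" unfolding U_def using B1[OF s'] B2[OF s'] by linarith
      have "\<bar>t * U (s,a,s')\<bar> \<le> t * (24 * Vm\<^sup>2)" using aU t0 by (simp add: abs_mult)
      also have "\<dots> \<le> 1" unfolding t_def using Vmpos by simp
      finally have E: "exp (- (t * U (s,a,s'))) \<le> 1 - t * U (s,a,s') + (t * U (s,a,s'))\<^sup>2" by (rule exp_quad)
      have "(U (s,a,s'))\<^sup>2 \<le> 72 * Vm\<^sup>2 * m s a"
      proof -
        have "(U (s,a,s'))\<^sup>2 \<le> 2 * (uu \<gamma> R lam V \<pi> gh (s,a,s'))\<^sup>2 + 2 * (uu \<gamma> R lam V0 \<pi>0 g' (s,a,s'))\<^sup>2"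
          unfolding U_def by (rule sq_diff_le)
        then show ?thesis using B1[OF s'] B2[OF s'] unfolding m_def by (simp add: algebra_simps)
      qed
      then have "t\<^sup>2 * (U (s,a,s'))\<^sup>2 \<le> t\<^sup>2 * (72 * Vm\<^sup>2 * m s a)" by (rule mult_left_mono) simp
      moreover have "(t * U (s,a,s'))\<^sup>2 = t\<^sup>2 * (U (s,a,s'))\<^sup>2" by (simp add: power_mult_distrib)
      moreover have "exp (- t * U (s,a,s')) = exp (- (t * U (s,a,s')))" by simp
      ultimately show ?thesis using E by linarith
    qed
    have sP1: "(\<Sum>s'\<in>S. pmf (P s a) s') = 1" using sum_pmf_eq_1[OF fS PS[OF sa]] .
    have EV: "measure_pmf.expectation (P s a) W = (\<Sum>s'\<in>S. pmf (P s a) s' * W s')" for W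
      by (rule exp_sum[OF fS PS[OF sa]])
    have C0: "V0 s = R s a + \<gamma> * (\<Sum>s'\<in>S. pmf (P s a) s' * V0 s') - lam * ln (pmf (\<pi>0 s) a)"
      using r0[OF sup] unfolding consist_def by (simp add: EV)
    have CC: "C s a = R s a + \<gamma> * (\<Sum>s'\<in>S. pmf (P s a) s' * V s') - lam * ln (pmf (\<pi> s) a)"
      unfolding C_def consist_def by (simp add: EV)
    have mean: "(\<Sum>s'\<in>S. pmf (P s a) s' * U (s,a,s')) = m s a"
    proof -
      have e1: "(\<Sum>s'\<in>S. pmf (P s a) s' * uu \<gamma> R lam V \<pi> gh (s,a,s')) = (V s - C s a)\<^sup>2"
      proof -
        have "(\<Sum>s'\<in>S. pmf (P s a) s' * uu \<gamma> R lam V \<pi> gh (s,a,s'))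
          = (V s - gh (s,a)) * (V s + gh (s,a) - 2 * (R s a + \<gamma> * (\<Sum>s'\<in>S. pmf (P s a) s' * V s') - lam * ln (pmf (\<pi> s) a)))"
          unfolding uu_def by (simp add: sumP_u[OF sP1])
        then show ?thesis unfolding CC[symmetric] ghC by (simp add: power2_eq_square algebra_simps)
      qed
      have e2: "(\<Sum>s'\<in>S. pmf (P s a) s' * uu \<gamma> R lam V0 \<pi>0 g' (s,a,s')) = - (V0 s - g' (s,a))\<^sup>2"
      proof -
        have "(\<Sum>s'\<in>S. pmf (P s a) s' * uu \<gamma> R lam V0 \<pi>0 g' (s,a,s'))
          = (V0 s - g' (s,a)) * (V0 s + g' (s,a) - 2 * (R s a + \<gamma> * (\<Sum>s'\<in>S. pmf (P s a) s' * V0 s') - lam * ln (pmf (\<pi>0 s) a)))"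
          unfolding uu_def by (simp add: sumP_u[OF sP1])
        then show ?thesis unfolding C0[symmetric] by (simp add: power2_eq_square algebra_simps)
      qed
      show ?thesis unfolding U_def m_def using e1 e2 by (simp add: right_diff_distrib sum_subtractf)
    qed
    have "(\<Sum>s'\<in>S. pmf (P s a) s' * exp (- t * U (s,a,s')))
        \<le> (\<Sum>s'\<in>S. pmf (P s a) s' * (1 - t * U (s,a,s') + t\<^sup>2 * (72 * Vm\<^sup>2 * m s a)))"
      by (intro sum_mono mult_left_mono pw) auto
    also have "\<dots> = (\<Sum>s'\<in>S. pmf (P s a) s') * (1 + t\<^sup>2 * (72 * Vm\<^sup>2 * m s a)) - t * (\<Sum>s'\<in>S. pmf (P s a) s' * U (s,a,s'))"
      by (simp add: algebra_simps sum_subtractf sum.distrib sum_distrib_left sum_distrib_right)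
    also have "\<dots> = 1 - t / 2 * m s a"
      unfolding sP1 mean t_def using Vmpos by (simp add: power2_eq_square field_simps)
    finally show ?thesis by (rule mult_left_mono) simp
  qed
  have musum: "(\<Sum>s\<in>S. \<Sum>a\<in>A. pmf \<mu> (s,a)) = 1"
    using sum_pmf_eq_1[OF finite_cartesian_product[OF fS fA] muS] by (simp add: sum.cartesian_product)
  have Dl: "norm2_mu \<mu> (\<lambda>(s,a). V s - consist \<gamma> P R lam \<pi> V (s,a)) \<le> (\<Sum>s\<in>S. \<Sum>a\<in>A. pmf \<mu> (s,a) * m s a)"
  proof -
    have "norm2_mu \<mu> (\<lambda>(s,a). V s - consist \<gamma> P R lam \<pi> V (s,a))
        = (\<Sum>x\<in>S \<times> A. pmf \<mu> x * ((\<lambda>(s,a). V s - consist \<gamma> P R lam \<pi> V (s,a)) x)\<^sup>2)"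
      unfolding norm2_mu_def by (rule exp_sum[OF finite_cartesian_product[OF fS fA] muS])
    also have "\<dots> = (\<Sum>s\<in>S. \<Sum>a\<in>A. pmf \<mu> (s,a) * (V s - C s a)\<^sup>2)"
      unfolding C_def by (simp add: sum.cartesian_product split_beta)
    also have "\<dots> \<le> (\<Sum>s\<in>S. \<Sum>a\<in>A. pmf \<mu> (s,a) * m s a)"
      unfolding m_def by (intro sum_mono mult_left_mono) auto
    finally show ?thesis .
  qed
  have "(\<Sum>s\<in>S. \<Sum>a\<in>A. pmf \<mu> (s,a) * (\<Sum>s'\<in>S. pmf (P s a) s' * exp (- t * U (s,a,s'))))
      \<le> (\<Sum>s\<in>S. \<Sum>a\<in>A. pmf \<mu> (s,a) * (1 - t / 2 * m s a))"
    by (intro sum_mono S2)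
  also have "\<dots> = (\<Sum>s\<in>S. \<Sum>a\<in>A. pmf \<mu> (s,a)) - t / 2 * (\<Sum>s\<in>S. \<Sum>a\<in>A. pmf \<mu> (s,a) * m s a)"
    by (simp add: algebra_simps sum_subtractf sum_distrib_left)
  also have "\<dots> \<le> 1 - t / 2 * norm2_mu \<mu> (\<lambda>(s,a). V s - consist \<gamma> P R lam \<pi> V (s,a))"
    unfolding musum using Dl t0 by simp
  also have "\<dots> \<le> exp (- (t / 2 * norm2_mu \<mu> (\<lambda>(s,a). V s - consist \<gamma> P R lam \<pi> V (s,a))))"
    using exp_ge_add_one_self[of "- (t / 2 * norm2_mu \<mu> (\<lambda>(s,a). V s - consist \<gamma> P R lam \<pi> V (s,a)))"] by simp
  also have "\<dots> = exp (- (norm2_mu \<mu> (\<lambda>(s,a). V s - consist \<gamma> P R lam \<pi> V (s,a)) / (288 * Vm\<^sup>2)))"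
    unfolding t_def by simp
  finally have "(\<integral>\<^sup>+x. ennreal (exp (- t * U x)) \<partial>measure_pmf (sample_pmf \<mu> P))
     \<le> ennreal (exp (- (norm2_mu \<mu> (\<lambda>(s,a). V s - consist \<gamma> P R lam \<pi> V (s,a)) / (288 * Vm\<^sup>2))))"
    unfolding S1 by (simp add: ennreal_leI)
  then show ?thesis unfolding t_def U_def .
qed


lemma norm2_zero:
  assumes "norm2_mu \<mu> f = 0" "finite X" "set_pmf \<mu> \<subseteq> X" "x \<in> set_pmf \<mu>"
  shows "f x = 0"
proof -
  have "(\<Sum>y\<in>X. pmf \<mu> y * (f y)\<^sup>2) = 0"
    using assms(1) unfolding norm2_mu_def exp_sum[OF assms(2,3)] .
  then have "\<forall>y\<in>X. pmf \<mu> y * (f y)\<^sup>2 = 0"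
    using assms(2) by (subst (asm) sum_nonneg_eq_0_iff) auto
  moreover have "x \<in> X" "pmf \<mu> x \<noteq> 0" using assms(3,4) by (auto simp: set_pmf_iff)
  ultimately show ?thesis by auto
qed

lemma norm2_bound:
  assumes "finite X" "set_pmf \<mu> \<subseteq> X" "\<And>x. x \<in> set_pmf \<mu> \<Longrightarrow> \<bar>f x\<bar> \<le> B"
  shows "norm2_mu \<mu> f \<le> B\<^sup>2"
proof -
  have "norm2_mu \<mu> f = (\<Sum>y\<in>X. pmf \<mu> y * (f y)\<^sup>2)"
    unfolding norm2_mu_def by (rule exp_sum[OF assms(1,2)])
  also have "\<dots> \<le> (\<Sum>y\<in>X. pmf \<mu> y * B\<^sup>2)"
  proof (rule sum_mono)
    fix y assume "y \<in> X"
    show "pmf \<mu> y * (f y)\<^sup>2 \<le> pmf \<mu> y * B\<^sup>2"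
    proof (cases "pmf \<mu> y = 0")
      case False
      then have "y \<in> set_pmf \<mu>" by (simp add: set_pmf_iff)
      then have "(f y)\<^sup>2 \<le> B\<^sup>2" using assms(3) by (metis abs_le_square_iff abs_ge_zero order_trans power2_abs abs_of_nonneg)
      then show ?thesis by (rule mult_left_mono) simp
    qed simp
  qed
  also have "\<dots> = B\<^sup>2" using sum_pmf_eq_1[OF assms(1,2)] by (simp add: sum_distrib_right[symmetric])
  finally show ?thesis .
qed

theorem theorem2:
  "\<exists>c::real. c > 0 \<and>
    (\<forall>(S::nat set) (A::nat set) (\<gamma>::real) P R Rmax d0 (\<mu>::(nat \<times> nat) pmf) (lam::real)
       Vc Pc Gc pistar pistar_lam (\<epsilon>::real) (\<delta>::real) (n::nat).
       finite_mdp S A \<gamma> P R Rmax d0 \<and> set_pmf \<mu> \<subseteq> S \<times> A \<and>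
       function_classes S A (Vmax A \<gamma> Rmax lam) lam Vc Pc Gc \<and>
       deterministic_policy S A pistar \<and>
       (\<forall>\<pi>. policy S A \<pi> \<longrightarrow> J_ret \<gamma> P R d0 \<pi> \<le> J_ret \<gamma> P R d0 pistar) \<and>
       policy S A pistar_lam \<and>
       (\<forall>\<pi>. policy S A \<pi> \<longrightarrow> J_reg \<gamma> P R d0 lam \<pi> \<le> J_reg \<gamma> P R d0 lam pistar_lam) \<and>
       \<epsilon> > 0 \<and> 0 < \<delta> \<and> \<delta> < 1 \<and>
       C2_finite S A \<gamma> P d0 \<mu> (insert pistar_lam Pc) \<and>
       eps_GVP \<gamma> P R lam \<mu> Gc Vc Pc = 0 \<and> eps_VP \<gamma> P R lam \<mu> Vc Pc = 0 \<and>
       0 < lam \<and> 2 * lam * ln (real (card A)) \<le> (1 - \<gamma>) * \<epsilon> \<and>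
       real n \<ge> c * conc_C2 \<gamma> P d0 \<mu> (insert pistar_lam Pc) * (Vmax A \<gamma> Rmax lam)\<^sup>2
                 * ln (real (card Vc * card Pc * card Gc) / \<delta>) / (\<epsilon>\<^sup>2 * (1 - \<gamma>)\<^sup>2)
       \<longrightarrow>
       measure_pmf.prob (dataset_pmf \<mu> P n)
         {D. \<forall>V \<pi>. sbeed_output \<gamma> R lam Vc Pc Gc D V \<pi> \<longrightarrow>
                 J_ret \<gamma> P R d0 pistar - J_ret \<gamma> P R d0 \<pi> \<le> \<epsilon>} \<ge> 1 - \<delta>)"
proof (intro exI[of _ "4608"] conjI allI impI)
  show "(4608::real) > 0" by simp
  fix S A :: "nat set" and \<gamma> :: real and P R Rmax d0 and \<mu> :: "(nat \<times> nat) pmf" and lam :: real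
    and Vc Pc Gc pistar pistar_lam and \<epsilon> \<delta> :: real and n :: nat
  assume H: "finite_mdp S A \<gamma> P R Rmax d0 \<and> set_pmf \<mu> \<subseteq> S \<times> A \<and>
       function_classes S A (Vmax A \<gamma> Rmax lam) lam Vc Pc Gc \<and>
       deterministic_policy S A pistar \<and>
       (\<forall>\<pi>. policy S A \<pi> \<longrightarrow> J_ret \<gamma> P R d0 \<pi> \<le> J_ret \<gamma> P R d0 pistar) \<and>
       policy S A pistar_lam \<and>
       (\<forall>\<pi>. policy S A \<pi> \<longrightarrow> J_reg \<gamma> P R d0 lam \<pi> \<le> J_reg \<gamma> P R d0 lam pistar_lam) \<and>
       \<epsilon> > 0 \<and> 0 < \<delta> \<and> \<delta> < 1 \<and>
       C2_finite S A \<gamma> P d0 \<mu> (insert pistar_lam Pc) \<and>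
       eps_GVP \<gamma> P R lam \<mu> Gc Vc Pc = 0 \<and> eps_VP \<gamma> P R lam \<mu> Vc Pc = 0 \<and>
       0 < lam \<and> 2 * lam * ln (real (card A)) \<le> (1 - \<gamma>) * \<epsilon> \<and>
       real n \<ge> 4608 * conc_C2 \<gamma> P d0 \<mu> (insert pistar_lam Pc) * (Vmax A \<gamma> Rmax lam)\<^sup>2
                 * ln (real (card Vc * card Pc * card Gc) / \<delta>) / (\<epsilon>\<^sup>2 * (1 - \<gamma>)\<^sup>2)"
  define Vm where "Vm = Vmax A \<gamma> Rmax lam"
  define C2 where "C2 = conc_C2 \<gamma> P d0 \<mu> (insert pistar_lam Pc)"
  define L where "L = ln (real (card Vc * card Pc * card Gc) / \<delta>)"
  define K where "K = real (card Vc * card Pc * card Gc)"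
  define E where "E = \<epsilon>\<^sup>2 * (1 - \<gamma>)\<^sup>2"
  define \<Delta> where "\<Delta> V \<pi> = norm2_mu \<mu> (\<lambda>(s,a). V s - consist \<gamma> P R lam \<pi> V (s,a))" for V \<pi>
  have mdp: "finite_mdp S A \<gamma> P R Rmax d0" using H by blast
  have muS: "set_pmf \<mu> \<subseteq> S \<times> A" using H by blast
  have fc: "function_classes S A Vm lam Vc Pc Gc" using H unfolding Vm_def by blast
  have det: "deterministic_policy S A pistar" using H by blast
  have polL: "policy S A pistar_lam" using H by blast
  have optL: "\<forall>\<pi>. policy S A \<pi> \<longrightarrow> J_reg \<gamma> P R d0 lam \<pi> \<le> J_reg \<gamma> P R d0 lam pistar_lam" using H by blast
  have eps: "\<epsilon> > 0" and d0: "0 < \<delta>" and d1: "\<delta> < 1" using H by auto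
  have C2f: "C2_finite S A \<gamma> P d0 \<mu> (insert pistar_lam Pc)" using H by blast
  have eG: "eps_GVP \<gamma> P R lam \<mu> Gc Vc Pc = 0" and eV: "eps_VP \<gamma> P R lam \<mu> Vc Pc = 0" using H by auto
  have lam: "0 < lam" and lame: "2 * lam * ln (real (card A)) \<le> (1 - \<gamma>) * \<epsilon>" using H by auto
  have nb: "real n \<ge> 4608 * C2 * Vm\<^sup>2 * L / E" using H unfolding C2_def Vm_def L_def E_def by blast
  have fS: "finite S" and fA: "finite A" and g0: "0 \<le> \<gamma>" and g1: "\<gamma> < 1" and SNE: "S \<noteq> {}" and ANE: "A \<noteq> {}"
    and RR: "\<And>s a. s \<in> S \<Longrightarrow> a \<in> A \<Longrightarrow> 0 \<le> R s a \<and> R s a \<le> Rmax"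
    using mdp by (auto simp: finite_mdp_def)
  have fSA: "finite (S \<times> A)" using fS fA by simp
  have fV: "finite Vc" and fP: "finite Pc" and fG: "finite Gc" and nV: "Vc \<noteq> {}" and nP: "Pc \<noteq> {}" and nG: "Gc \<noteq> {}"
    and VB: "\<And>V s. V \<in> Vc \<Longrightarrow> s \<in> S \<Longrightarrow> 0 \<le> V s \<and> V s \<le> Vm"
    and PB: "\<And>\<pi>. \<pi> \<in> Pc \<Longrightarrow> policy S A \<pi>"
    and PB2: "\<And>\<pi> s a. \<pi> \<in> Pc \<Longrightarrow> s \<in> S \<Longrightarrow> a \<in> A \<Longrightarrow> \<bar>ln (pmf (\<pi> s) a)\<bar> \<le> Vm / lam \<and> 0 < pmf (\<pi> s) a"
    and GB: "\<And>g x. g \<in> Gc \<Longrightarrow> x \<in> S \<times> A \<Longrightarrow> 0 \<le> g x \<and> g x \<le> 2 * Vm"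
    using fc unfolding function_classes_def by blast+
  have Lp: "\<bar>lam * ln (pmf (\<pi> s) a)\<bar> \<le> Vm" if "\<pi> \<in> Pc" "s \<in> S" "a \<in> A" for \<pi> s a
  proof -
    have "\<bar>lam * ln (pmf (\<pi> s) a)\<bar> = lam * \<bar>ln (pmf (\<pi> s) a)\<bar>" using lam by (simp add: abs_mult)
    also have "\<dots> \<le> lam * (Vm / lam)" using PB2[OF that] lam by (intro mult_left_mono) auto
    finally show ?thesis using lam by simp
  qed
  have gp: "0 < 1 - \<gamma>" using g1 by simp
  have "0 < card A" using fA ANE by (simp add: card_gt_0_iff)
  then have cA: "1 \<le> real (card A)" by linarith
  then have lnA: "0 \<le> ln (real (card A))" by simp
  obtain s0 a0 where "s0 \<in> S" "a0 \<in> A" using SNE ANE by blast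
  then have Rm0: "0 \<le> Rmax" using RR by force
  have VmE: "(1 - \<gamma>) * Vm = Rmax + lam * ln (real (card A))" unfolding Vm_def Vmax_def using gp by simp
  have Vm0: "0 \<le> Vm" unfolding Vm_def Vmax_def using Rm0 lam lnA gp by simp
  have Rle: "Rmax \<le> (1 - \<gamma>) * Vm" using VmE lam lnA by simp
  have E0: "0 < E" unfolding E_def using eps gp by simp
  have "0 < card Vc * card Pc * card Gc" using fV fP fG nV nP nG by (simp add: card_gt_0_iff)
  then have K1: "1 \<le> K" unfolding K_def by linarith
  have L0: "0 \<le> L" unfolding L_def using K1 d0 d1 unfolding K_def by (simp add: le_divide_eq)
  obtain V0 \<pi>0 where V0: "V0 \<in> Vc" and \<pi>0: "\<pi>0 \<in> Pc"
    and r0: "\<And>x. x \<in> set_pmf \<mu> \<Longrightarrow> V0 (fst x) = consist \<gamma> P R lam \<pi>0 V0 x"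
  proof -
    let ?F = "(\<lambda>(V, \<pi>). norm2_mu \<mu> (\<lambda>(s,a). V s - consist \<gamma> P R lam \<pi> V (s,a)))"
    have "Min (?F ` (Vc \<times> Pc)) \<in> ?F ` (Vc \<times> Pc)" using fV fP nV nP by (intro Min_in) auto
    then obtain V0 \<pi>0 where m: "V0 \<in> Vc" "\<pi>0 \<in> Pc" "?F (V0, \<pi>0) = 0"
      using eV unfolding eps_VP_def by auto
    show ?thesis
    proof (rule that[OF m(1,2)])
      fix x assume x: "x \<in> set_pmf \<mu>"
      have "(\<lambda>(s,a). V0 s - consist \<gamma> P R lam \<pi>0 V0 (s,a)) x = 0"
        by (rule norm2_zero[OF _ fSA muS x]) (use m(3) in simp)
      then show "V0 (fst x) = consist \<gamma> P R lam \<pi>0 V0 x" by (cases x) simp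
    qed
  qed
  have ex_g: "\<exists>g\<in>Gc. \<forall>x\<in>set_pmf \<mu>. g x = consist \<gamma> P R lam \<pi> V x" if V: "V \<in> Vc" and \<pi>: "\<pi> \<in> Pc" for V \<pi>
  proof -
    let ?M = "\<lambda>(V, \<pi>). Min ((\<lambda>g. norm2_mu \<mu> (\<lambda>x. g x - consist \<gamma> P R lam \<pi> V x)) ` Gc)"
    have "?M (V, \<pi>) \<le> Max (?M ` (Vc \<times> Pc))" using fV fP V \<pi> by (intro Max_ge) auto
    then have le: "?M (V, \<pi>) \<le> 0" using eG unfolding eps_GVP_def by simp
    have "Min ((\<lambda>g. norm2_mu \<mu> (\<lambda>x. g x - consist \<gamma> P R lam \<pi> V x)) ` Gc) \<in> (\<lambda>g. norm2_mu \<mu> (\<lambda>x. g x - consist \<gamma> P R lam \<pi> V x)) ` Gc"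
      using fG nG by (intro Min_in) auto
    then obtain g where g: "g \<in> Gc" and "norm2_mu \<mu> (\<lambda>x. g x - consist \<gamma> P R lam \<pi> V x) \<le> 0" using le by auto
    then have z: "norm2_mu \<mu> (\<lambda>x. g x - consist \<gamma> P R lam \<pi> V x) = 0" using norm2_nonneg by (metis order_antisym)
    show ?thesis
    proof (intro bexI[OF _ g] ballI)
      fix x assume "x \<in> set_pmf \<mu>"
      then have "g x - consist \<gamma> P R lam \<pi> V x = 0" by (rule norm2_zero[OF z fSA muS])
      then show "g x = consist \<gamma> P R lam \<pi> V x" by simp
    qed
  qed
  define gh where "gh V \<pi> = (SOME g. g \<in> Gc \<and> (\<forall>x\<in>set_pmf \<mu>. g x = consist \<gamma> P R lam \<pi> V x))" for V \<pi>
  have gh: "gh V \<pi> \<in> Gc \<and> (\<forall>x\<in>set_pmf \<mu>. gh V \<pi> x = consist \<gamma> P R lam \<pi> V x)" if "V \<in> Vc" "\<pi> \<in> Pc" for V \<pi>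
    unfolding gh_def using someI_ex[OF ex_g[OF that, unfolded Bex_def]] by blast
  define I where "I = {(V, \<pi>, g'). V \<in> Vc \<and> \<pi> \<in> Pc \<and> g' \<in> Gc \<and> E < 16 * C2 * \<Delta> V \<pi>}"
  define B where "B = (\<lambda>(V, \<pi>, g'). {D. sum_list (map (\<lambda>x. uu \<gamma> R lam V \<pi> (gh V \<pi>) x - uu \<gamma> R lam V0 \<pi>0 g' x) D) \<le> (0::real)})"
  have IS: "I \<subseteq> Vc \<times> Pc \<times> Gc" unfolding I_def by auto
  have fI: "finite I" using finite_subset[OF IS] fV fP fG by blast
  have cI: "real (card I) \<le> K"
  proof -
    have "card I \<le> card (Vc \<times> Pc \<times> Gc)" using IS fV fP fG by (intro card_mono) auto
    then have "card I \<le> card Vc * card Pc * card Gc" by (simp add: card_cartesian_product mult.assoc)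
    then show ?thesis unfolding K_def by (simp only: of_nat_le_iff)
  qed
  have C2ge: "norm2_mu \<mu> (\<lambda>x. occupancy \<gamma> P d0 \<pi> x / pmf \<mu> x) \<le> C2" if "\<pi> \<in> insert pistar_lam Pc" for \<pi>
    unfolding C2_def conc_C2_def using fP that by (intro Max_ge) auto
  have C20: "0 \<le> C2" using C2ge[of pistar_lam] norm2_nonneg order_trans by blast
  have claim1: "measure_pmf.prob (dataset_pmf \<mu> P n) (B i) \<le> \<delta> / K" if i: "i \<in> I" for i
  proof -
    obtain V \<pi> g' where ie: "i = (V, \<pi>, g')" by (cases i) auto
    have V: "V \<in> Vc" and \<pi>: "\<pi> \<in> Pc" and g': "g' \<in> Gc" and bad: "E < 16 * C2 * \<Delta> V \<pi>"
      using i unfolding ie I_def by auto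
    have ghV: "gh V \<pi> \<in> Gc" and rh: "\<And>x. x \<in> set_pmf \<mu> \<Longrightarrow> gh V \<pi> x = consist \<gamma> P R lam \<pi> V x"
      using gh[OF V \<pi>] by auto
    have D0: "0 \<le> \<Delta> V \<pi>" unfolding \<Delta>_def by (rule norm2_nonneg)
    have pos: "0 < 16 * C2 * \<Delta> V \<pi>" using bad E0 by linarith
    then have C2p: "0 < C2" and Dp: "0 < \<Delta> V \<pi>" using C20 D0
      by (auto simp: zero_less_mult_iff)
    have "\<Delta> V \<pi> \<le> (2 * Vm)\<^sup>2"
      unfolding \<Delta>_def
    proof (rule norm2_bound[OF fSA muS])
      fix x assume x: "x \<in> set_pmf \<mu>"
      obtain s a where xe: "x = (s,a)" by (cases x)
      have sa: "s \<in> S" "a \<in> A" using x muS xe by auto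
      have "consist \<gamma> P R lam \<pi> V (s,a) = gh V \<pi> (s,a)" using rh[OF x] xe by simp
      then show "\<bar>(\<lambda>(s,a). V s - consist \<gamma> P R lam \<pi> V (s,a)) x\<bar> \<le> 2 * Vm"
        using VB[OF V sa(1)] GB[OF ghV, of "(s,a)"] sa xe by auto
    qed
    then have Vmp: "0 < Vm" using Dp Vm0 by (cases "Vm = 0") auto
    have mg: "(\<integral>\<^sup>+x. ennreal (exp (- (1 / (144 * Vm\<^sup>2)) * (uu \<gamma> R lam V \<pi> (gh V \<pi>) x - uu \<gamma> R lam V0 \<pi>0 g' x))) \<partial>measure_pmf (sample_pmf \<mu> P))
       \<le> ennreal (exp (- (\<Delta> V \<pi> / (288 * Vm\<^sup>2))))"
      unfolding \<Delta>_def
      by (rule mgf[OF mdp muS Vmp Rle]) (use VB[OF V] VB[OF V0] Lp[OF \<pi>] Lp[OF \<pi>0] GB[OF ghV] GB[OF g'] rh r0 in auto)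
    have "measure_pmf.prob (dataset_pmf \<mu> P n) (B i) \<le> (exp (- (\<Delta> V \<pi> / (288 * Vm\<^sup>2)))) ^ n"
      unfolding ie B_def by simp (rule chernoff[OF _ _ mg], use Vmp in auto)
    also have "\<dots> = exp (- (real n * \<Delta> V \<pi> / (288 * Vm\<^sup>2)))"
      by (simp add: exp_of_nat_mult[symmetric])
    also have "\<dots> \<le> exp (- L)"
    proof -
      have "4608 * C2 * Vm\<^sup>2 * L \<le> real n * E" using nb E0 by (simp add: pos_divide_le_eq)
      also have "\<dots> \<le> real n * (16 * C2 * \<Delta> V \<pi>)" using bad by (intro mult_left_mono) auto
      finally have "16 * C2 * (288 * Vm\<^sup>2 * L) \<le> 16 * C2 * (real n * \<Delta> V \<pi>)" by (simp add: algebra_simps)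
      then have "288 * Vm\<^sup>2 * L \<le> real n * \<Delta> V \<pi>" using C2p by (simp add: mult.commute mult.left_commute)
      then have "L \<le> real n * \<Delta> V \<pi> / (288 * Vm\<^sup>2)" using Vmp by (simp add: le_divide_eq mult.commute)
      then show ?thesis by simp
    qed
    also have "\<dots> = \<delta> / K" unfolding L_def K_def using K1 d0 unfolding K_def by (simp add: exp_minus)
    finally show ?thesis .
  qed
  have claim2: "UNIV - (\<Union>i\<in>I. B i) \<subseteq> {D. \<forall>V \<pi>. sbeed_output \<gamma> R lam Vc Pc Gc D V \<pi> \<longrightarrow>
                 J_ret \<gamma> P R d0 pistar - J_ret \<gamma> P R d0 \<pi> \<le> \<epsilon>}"
  proof (intro subsetI CollectI allI impI)
    fix D V \<pi> assume D: "D \<in> UNIV - (\<Union>i\<in>I. B i)" and out: "sbeed_output \<gamma> R lam Vc Pc Gc D V \<pi>"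
    have V: "V \<in> Vc" and \<pi>: "\<pi> \<in> Pc" using out unfolding sbeed_output_def by auto
    have small: "16 * C2 * \<Delta> V \<pi> \<le> E"
    proof (rule ccontr)
      assume "\<not> 16 * C2 * \<Delta> V \<pi> \<le> E"
      then have bad: "E < 16 * C2 * \<Delta> V \<pi>" by simp
      obtain g' where g': "g' \<in> Gc"
        and le: "sum_list (map (uu \<gamma> R lam V \<pi> (gh V \<pi>)) D) \<le> sum_list (map (uu \<gamma> R lam V0 \<pi>0 g') D)"
        using emp[OF out V0 \<pi>0 conjunct1[OF gh[OF V \<pi>]] fG] by blast
      have "(V, \<pi>, g') \<in> I" unfolding I_def using V \<pi> g' bad by auto
      moreover have "D \<in> B (V, \<pi>, g')" unfolding B_def using le by (simp add: sum_list_subtractf)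
      ultimately show False using D by blast
    qed
    show "J_ret \<gamma> P R d0 pistar - J_ret \<gamma> P R d0 \<pi> \<le> \<epsilon>"
    proof (rule gap[OF mdp det polL _ PB[OF \<pi>] _ lam muS _ _ C2ge C2ge _ lame eps])
      show "J_reg \<gamma> P R d0 lam pistar \<le> J_reg \<gamma> P R d0 lam pistar_lam"
        using optL det by (simp add: deterministic_policy_def)
      show "\<And>s a. s \<in> S \<Longrightarrow> a \<in> A \<Longrightarrow> 0 < pmf (\<pi> s) a" using PB2[OF \<pi>] by blast
      show "\<And>x. x \<in> S \<times> A \<Longrightarrow> pmf \<mu> x = 0 \<Longrightarrow> occupancy \<gamma> P d0 pistar_lam x = 0"
        using C2f unfolding C2_finite_def by blast
      show "\<And>x. x \<in> S \<times> A \<Longrightarrow> pmf \<mu> x = 0 \<Longrightarrow> occupancy \<gamma> P d0 \<pi> x = 0"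
        using C2f \<pi> unfolding C2_finite_def by blast
      show "pistar_lam \<in> insert pistar_lam Pc" by simp
      show "\<pi> \<in> insert pistar_lam Pc" using \<pi> by simp
      show "16 * C2 * norm2_mu \<mu> (\<lambda>(s,a). V s - consist \<gamma> P R lam \<pi> V (s,a)) \<le> \<epsilon>\<^sup>2 * (1 - \<gamma>)\<^sup>2"
        using small unfolding \<Delta>_def E_def .
    qed
  qed
  have claim3: "measure_pmf.prob (dataset_pmf \<mu> P n) (\<Union>i\<in>I. B i) \<le> \<delta>"
  proof -
    have "measure_pmf.prob (dataset_pmf \<mu> P n) (\<Union>i\<in>I. B i) \<le> (\<Sum>i\<in>I. measure_pmf.prob (dataset_pmf \<mu> P n) (B i))"
      by (rule measure_pmf.finite_measure_subadditive_finite[OF fI]) auto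
    also have "\<dots> \<le> (\<Sum>i\<in>I. \<delta> / K)" by (rule sum_mono[OF claim1])
    also have "\<dots> = real (card I) * (\<delta> / K)" by simp
    also have "\<dots> \<le> K * (\<delta> / K)" using cI d0 K1 by (intro mult_right_mono) auto
    also have "\<dots> = \<delta>" using K1 by simp
    finally show ?thesis .
  qed
  have "measure_pmf.prob (dataset_pmf \<mu> P n) (UNIV - (\<Union>i\<in>I. B i)) = 1 - measure_pmf.prob (dataset_pmf \<mu> P n) (\<Union>i\<in>I. B i)"
    using measure_pmf.prob_compl[of "\<Union>i\<in>I. B i" "dataset_pmf \<mu> P n"] by simp
  moreover have "measure_pmf.prob (dataset_pmf \<mu> P n) (UNIV - (\<Union>i\<in>I. B i)) \<le>
     measure_pmf.prob (dataset_pmf \<mu> P n) {D. \<forall>V \<pi>. sbeed_output \<gamma> R lam Vc Pc Gc D V \<pi> \<longrightarrow>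
                 J_ret \<gamma> P R d0 pistar - J_ret \<gamma> P R d0 \<pi> \<le> \<epsilon>}"
    by (rule measure_pmf.finite_measure_mono[OF claim2]) simp
  ultimately show "measure_pmf.prob (dataset_pmf \<mu> P n)
         {D. \<forall>V \<pi>. sbeed_output \<gamma> R lam Vc Pc Gc D V \<pi> \<longrightarrow>
                 J_ret \<gamma> P R d0 pistar - J_ret \<gamma> P R d0 \<pi> \<le> \<epsilon>} \<ge> 1 - \<delta>"
    using claim3 by linarith
qed


end
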